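(* Let $n\ge3$, $k\ge1$, $i\in\{1,2,3\}$, and set $\lambda_{n,k}:=k(k+n-2)$, $\sigma_{n,k,1}:=-k$, $\sigma_{n,k,2}:=1$, $\sigma_{n,k,3}:=k+n-2$. For every $w\in H_{n,k,i}$: $$Q_{V_n}(w)=c_{n,k,i}\mathrm{Av}(|\nabla_T w|^2),\quad c_{n,k,i}:=\frac{n\sigma_{n,k,i}}{2\lambda_{n,k}};$$ $$\mathrm{Av}\big((\mathrm{div}_{\mathbb S^{n-1}}w)^2\big)=\alpha_{n,k,i}\mathrm{Av}(|\nabla_T w|^2),\quad \alpha_{n,k,i}:=\frac{\sigma_{n,k,i}^2(2\lambda_{n,k}c_{n,k,i}-n)}{n\lambda_{n,k}(2\sigma_{n,k,i}-n)};$$ $$Q_n(w)=C_{n,k,i}\mathrm{Av}(|\nabla_T w|^2),\quad C_{n,k,i}:=\frac{n}{2(n-1)}+\frac{n(n-3)}{2(n-1)^2}\alpha_{n,k,i}-c_{n,k,i}.$$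
   Context: $\mathbb S^{n-1}\subset\mathbb R^n$ unit sphere, $B_1$ unit ball; $\mathrm{Av}(f):=\frac{1}{\mathcal H^{n-1}(\mathbb S^{n-1})}\int_{\mathbb S^{n-1}}f\,d\mathcal H^{n-1}$. $\{\tau_i\}$ local orthonormal tangent frame; $\nabla_T w$ tangential gradient ($n\times(n-1)$ matrix with entries $\partial_{\tau_j}w^i$), $\nabla_T w^j$ tangential gradient vector of the $j$-th component, $\mathrm{div}_{\mathbb S^{n-1}}w:=\sum_i\langle\partial_{\tau_i}w,\tau_i\rangle$, $|\cdot|$ Frobenius norm; $w_h$ componentwise harmonic extension. $H_n:=\{w\in W^{1,2}(\mathbb S^{n-1};\mathbb R^n):\mathrm{Av}(w)=0,\mathrm{Av}(\langle w,x\rangle)=0\}$; $A(w):=(\mathrm{div}_{\mathbb S^{n-1}}w)x-\sum_{j=1}^nx_j\nabla_T w^j$; $Q_{V_n}(w):=\frac n2\mathrm{Av}(\langle w,A(w)\rangle)$; $Q_n(w):=\frac{n}{2(n-1)}\mathrm{Av}\big(|\nabla_T w|^2+\frac{n-3}{n-1}(\mathrm{div}_{\mathbb S^{n-1}}w)^2\big)-Q_{V_n}(w)$. For $k\ge1$: $H_{n,k}$ is the subspace of $H_n$ of maps whose components are $k$-th order spherical harmonics; $H_{n,k,\mathrm{sol}}:=\{w\in H_{n,k}:\mathrm{div}\,w_h\equiv0\text{ in }B_1\}$; $H_{n,k,1}:=\{w\in H_{n,k,\mathrm{sol}}:A(w)=-kw\}$, $H_{n,k,2}:=\{w\in H_{n,k,\mathrm{sol}}:A(w)=w\}$,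 and $H_{n,k,3}$ is the $W^{1,2}$-orthogonal complement of $H_{n,k,\mathrm{sol}}$ in $H_{n,k}$. *)

theory Defs
  imports "HOL-Analysis.Analysis"
begin

text \<open>Points of R^n are vectors of type real^'n, n = CARD('n).\<close>

definition hom_poly :: "nat \<Rightarrow> (real^'n \<Rightarrow> real) \<Rightarrow> bool" where
  "hom_poly k f \<longleftrightarrow> (\<exists>c :: ('n \<Rightarrow> nat) \<Rightarrow> real.
      finite {a. c a \<noteq> 0} \<and> (\<forall>a. c a \<noteq> 0 \<longrightarrow> sum a UNIV = k) \<and>
      (\<forall>x. f x = (\<Sum>a\<in>{a. c a \<noteq> 0}. c a * (\<Prod>i\<in>UNIV. (x $ i) ^ a i))))"

definition pd :: "'n \<Rightarrow> (real^'n \<Rightarrow> real) \<Rightarrow> real^'n \<Rightarrow> real" where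
  "pd i f x = deriv (\<lambda>t. f (x + t *\<^sub>R axis i 1)) 0"

definition laplacian :: "(real^'n \<Rightarrow> real) \<Rightarrow> real^'n \<Rightarrow> real" where
  "laplacian f x = (\<Sum>i\<in>UNIV. pd i (pd i f) x)"

text \<open>k-th order spherical harmonics, represented by the homogeneous harmonic polynomial
  of degree k (which is also their harmonic extension).\<close>
definition sph_harm :: "nat \<Rightarrow> (real^'n \<Rightarrow> real) \<Rightarrow> bool" where
  "sph_harm k f \<longleftrightarrow> hom_poly k f \<and> (\<forall>x. laplacian f x = 0)"

definition grad :: "(real^'n \<Rightarrow> real) \<Rightarrow> real^'n \<Rightarrow> real^'n" where
  "grad f x = (\<chi> i. pd i f x)"

text \<open>Tangential gradient at a point x of the unit sphere.\<close>
definition gradT :: "(real^'n \<Rightarrow> real) \<Rightarrow> real^'n \<Rightarrow> real^'n" where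
  "gradT f x = grad f x - (grad f x \<bullet> x) *\<^sub>R x"

definition comp :: "(real^'n \<Rightarrow> real^'n) \<Rightarrow> 'n \<Rightarrow> real^'n \<Rightarrow> real" where
  "comp w j = (\<lambda>y. w y $ j)"

definition gradT_sq :: "(real^'n \<Rightarrow> real^'n) \<Rightarrow> real^'n \<Rightarrow> real" where
  "gradT_sq w x = (\<Sum>j\<in>UNIV. (norm (gradT (comp w j) x))\<^sup>2)"

text \<open>Spherical divergence: sum_i <d_{tau_i} w, tau_i> = sum_j (grad_T w^j)_j (frame independent).\<close>
definition divS :: "(real^'n \<Rightarrow> real^'n) \<Rightarrow> real^'n \<Rightarrow> real" where
  "divS w x = (\<Sum>j\<in>UNIV. gradT (comp w j) x $ j)"

text \<open>Euclidean divergence (of the harmonic extension).\<close>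
definition divE :: "(real^'n \<Rightarrow> real^'n) \<Rightarrow> real^'n \<Rightarrow> real" where
  "divE w x = (\<Sum>j\<in>UNIV. pd j (comp w j) x)"

definition Aop :: "(real^'n \<Rightarrow> real^'n) \<Rightarrow> real^'n \<Rightarrow> real^'n" where
  "Aop w x = divS w x *\<^sub>R x - (\<Sum>j\<in>UNIV. (x $ j) *\<^sub>R gradT (comp w j) x)"

text \<open>Average over the unit sphere w.r.t. normalized surface measure, expressed through the
  cone measure: Av f = (1/|B_1|) int_{B_1} f(x/|x|) dx.\<close>
definition Av :: "(real^'n \<Rightarrow> 'b::euclidean_space) \<Rightarrow> 'b" where
  "Av f = integral (ball 0 1) (\<lambda>x. f (x /\<^sub>R norm x)) /\<^sub>R measure lborel (ball (0::real^'n) 1)"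

definition Hn :: "(real^'n \<Rightarrow> real^'n) \<Rightarrow> bool" where
  "Hn w \<longleftrightarrow> Av w = 0 \<and> Av (\<lambda>x. w x \<bullet> x) = 0"

definition Hnk :: "nat \<Rightarrow> (real^'n \<Rightarrow> real^'n) \<Rightarrow> bool" where
  "Hnk k w \<longleftrightarrow> Hn w \<and> (\<forall>j. sph_harm k (comp w j))"

definition Hsol :: "nat \<Rightarrow> (real^'n \<Rightarrow> real^'n) \<Rightarrow> bool" where
  "Hsol k w \<longleftrightarrow> Hnk k w \<and> (\<forall>x\<in>ball 0 1. divE w x = 0)"

definition H1 :: "nat \<Rightarrow> (real^'n \<Rightarrow> real^'n) \<Rightarrow> bool" where
  "H1 k w \<longleftrightarrow> Hsol k w \<and> (\<forall>x\<in>sphere 0 1. Aop w x = - real k *\<^sub>R w x)"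

definition H2 :: "nat \<Rightarrow> (real^'n \<Rightarrow> real^'n) \<Rightarrow> bool" where
  "H2 k w \<longleftrightarrow> Hsol k w \<and> (\<forall>x\<in>sphere 0 1. Aop w x = w x)"

text \<open>W^{1,2}(S^{n-1}) inner product (normalized; normalization irrelevant for orthogonality).\<close>
definition W12_inner :: "(real^'n \<Rightarrow> real^'n) \<Rightarrow> (real^'n \<Rightarrow> real^'n) \<Rightarrow> real" where
  "W12_inner w v = Av (\<lambda>x. w x \<bullet> v x + (\<Sum>j\<in>UNIV. gradT (comp w j) x \<bullet> gradT (comp v j) x))"

definition H3 :: "nat \<Rightarrow> (real^'n \<Rightarrow> real^'n) \<Rightarrow> bool" where
  "H3 k w \<longleftrightarrow> Hnk k w \<and> (\<forall>v. Hsol k v \<longrightarrow> W12_inner w v = 0)"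

definition Hki :: "nat \<Rightarrow> nat \<Rightarrow> (real^'n \<Rightarrow> real^'n) \<Rightarrow> bool" where
  "Hki k i w \<longleftrightarrow> (if i = 1 then H1 k w else if i = 2 then H2 k w else H3 k w)"

definition QV :: "(real^'n \<Rightarrow> real^'n) \<Rightarrow> real" where
  "QV w = real CARD('n) / 2 * Av (\<lambda>x. w x \<bullet> Aop w x)"

definition Qn :: "(real^'n \<Rightarrow> real^'n) \<Rightarrow> real" where
  "Qn w = (let n = real CARD('n) in
     n / (2 * (n - 1)) * Av (\<lambda>x. gradT_sq w x + (n - 3) / (n - 1) * (divS w x)\<^sup>2) - QV w)"

definition lam :: "real \<Rightarrow> nat \<Rightarrow> real" where
  "lam n k = real k * (real k + n - 2)"

definition sig :: "real \<Rightarrow> nat \<Rightarrow> nat \<Rightarrow> real" where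
  "sig n k i = (if i = 1 then - real k else if i = 2 then 1 else real k + n - 2)"

definition cc :: "real \<Rightarrow> nat \<Rightarrow> nat \<Rightarrow> real" where
  "cc n k i = n * sig n k i / (2 * lam n k)"

definition alph :: "real \<Rightarrow> nat \<Rightarrow> nat \<Rightarrow> real" where
  "alph n k i = (sig n k i)\<^sup>2 * (2 * lam n k * cc n k i - n) / (n * lam n k * (2 * sig n k i - n))"

definition CC :: "real \<Rightarrow> nat \<Rightarrow> nat \<Rightarrow> real" where
  "CC n k i = n / (2 * (n - 1)) + n * (n - 3) / (2 * (n - 1)\<^sup>2) * alph n k i - cc n k i"

end

theory Submission
  imports Defs
begin


definition mnm :: "('n \<Rightarrow> nat) \<Rightarrow> real^'n \<Rightarrow> real" where
  "mnm a x = (\<Prod>i\<in>UNIV. x$i ^ a i)"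

definition evalp :: "(('n \<Rightarrow> nat) \<times> real) list \<Rightarrow> real^'n \<Rightarrow> real" where
  "evalp xs x = (\<Sum>p\<leftarrow>xs. snd p * mnm (fst p) x)"

definition hdeg :: "nat \<Rightarrow> ((('n::finite) \<Rightarrow> nat) \<times> real) list \<Rightarrow> bool" where
  "hdeg k xs \<longleftrightarrow> (\<forall>p\<in>set xs. sum (fst p) UNIV = k)"

definition hpoly :: "nat \<Rightarrow> (real^'n \<Rightarrow> real) \<Rightarrow> bool" where
  "hpoly k f \<longleftrightarrow> (\<exists>xs. hdeg k xs \<and> f = evalp xs)"

definition dl :: "'n \<Rightarrow> (('n \<Rightarrow> nat) \<times> real) list \<Rightarrow> (('n \<Rightarrow> nat) \<times> real) list" where
  "dl i xs = map (\<lambda>p. ((fst p)(i := fst p i - 1), snd p * real (fst p i))) (filter (\<lambda>p. 0 < fst p i) xs)"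

definition mulp :: "(('n \<Rightarrow> nat) \<times> real) list \<Rightarrow> (('n \<Rightarrow> nat) \<times> real) list \<Rightarrow> (('n \<Rightarrow> nat) \<times> real) list" where
  "mulp xs ys = concat (map (\<lambda>p. map (\<lambda>q. (\<lambda>j. fst p j + fst q j, snd p * snd q)) ys) xs)"

lemma evalp_Nil[simp]: "evalp [] x = 0" by (simp add: evalp_def)
lemma evalp_Cons[simp]: "evalp (p#xs) x = snd p * mnm (fst p) x + evalp xs x" by (simp add: evalp_def)
lemma evalp_append[simp]: "evalp (xs @ ys) x = evalp xs x + evalp ys x" by (simp add: evalp_def)
lemma evalp_scale: "evalp (map (\<lambda>p. (fst p, r * snd p)) xs) x = r * evalp xs x"
  by (induction xs) (auto simp: algebra_simps)
lemma mnm_add: "mnm (\<lambda>j. a j + b j) x = mnm a x * mnm b x"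
  by (simp add: mnm_def power_add prod.distrib)
lemma evalp_mulp: "evalp (mulp xs ys) x = evalp xs x * evalp ys x"
proof (induction xs)
  case Nil then show ?case by (simp add: mulp_def)
next
  case (Cons p xs)
  have "evalp (map (\<lambda>q. (\<lambda>j. fst p j + fst q j, snd p * snd q)) ys) x = snd p * mnm (fst p) x * evalp ys x"
    by (induction ys) (auto simp: mnm_add algebra_simps)
  with Cons show ?case by (simp add: mulp_def algebra_simps)
qed
lemma mnm_zero[simp]: "mnm (\<lambda>_. 0) x = 1" by (simp add: mnm_def)
lemma mnm_coord: "mnm (\<lambda>j. if j = i then 1 else 0) x = x$i"
proof -
  have "mnm (\<lambda>j. if j = i then 1 else 0) x = (\<Prod>j\<in>UNIV. if j = i then x$j else 1)"
    unfolding mnm_def by (rule prod.cong) auto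
  also have "\<dots> = x$i" by (simp add: prod.delta)
  finally show ?thesis .
qed
lemma mnm_scale: "mnm a (r *\<^sub>R x) = r ^ (sum a UNIV) * mnm a x"
  by (simp add: mnm_def power_mult_distrib prod.distrib power_sum)

lemma mnm_split: "mnm a y = y$i ^ a i * (\<Prod>j\<in>UNIV-{i}. y$j ^ a j)"
  unfolding mnm_def by (simp add: prod.remove)

lemma mnm_deriv:
  "((\<lambda>t. mnm a (x + t *\<^sub>R axis i 1)) has_real_derivative
     (if 0 < a i then real (a i) * mnm (a(i := a i - 1)) (x + t *\<^sub>R axis i 1) else 0)) (at t)"
proof -
  define R where "R = (\<Prod>j\<in>UNIV-{i}. x$j ^ a j)"
  have R: "(\<Prod>j\<in>UNIV-{i}. (x + s *\<^sub>R axis i 1)$j ^ b j) = (\<Prod>j\<in>UNIV-{i}. x$j ^ b j)" for s and b :: "'a \<Rightarrow> nat"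
    by (rule prod.cong) (auto simp: axis_def)
  have e: "mnm a (x + s *\<^sub>R axis i 1) = (x$i + s) ^ a i * R" for s
    unfolding R_def using mnm_split[of a _ i] R[of s a] by (simp add: axis_def)
  have R2: "(\<Prod>j\<in>UNIV-{i}. x$j ^ (a(i := a i - 1)) j) = R"
    unfolding R_def by (rule prod.cong) auto
  have e2: "mnm (a(i := a i - 1)) (x + s *\<^sub>R axis i 1) = (x$i + s) ^ (a i - 1) * R" for s
    using mnm_split[of "a(i := a i - 1)" _ i] R[of s "a(i := a i - 1)"] R2 by (simp add: axis_def)
  have "((\<lambda>t. (x$i + t) ^ a i * R) has_real_derivative (real (a i) * (x$i + t) ^ (a i - 1) * R)) (at t)"
    by (auto intro!: derivative_eq_intros)
  then show ?thesis
    unfolding e e2 by (cases "0 < a i") (auto simp: mult.assoc)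
qed

lemma evalp_deriv:
  "((\<lambda>t. evalp xs (x + t *\<^sub>R axis i 1)) has_real_derivative evalp (dl i xs) (x + t *\<^sub>R axis i 1)) (at t)"
proof (induction xs)
  case Nil then show ?case by (simp add: dl_def)
next
  case (Cons p xs)
  have d: "dl i (p#xs) = (if 0 < fst p i then [((fst p)(i := fst p i - 1), snd p * real (fst p i))] else []) @ dl i xs"
    by (simp add: dl_def)
  have "((\<lambda>t. snd p * mnm (fst p) (x + t *\<^sub>R axis i 1) + evalp xs (x + t *\<^sub>R axis i 1)) has_real_derivative
      snd p * (if 0 < fst p i then real (fst p i) * mnm ((fst p)(i := fst p i - 1)) (x + t *\<^sub>R axis i 1) else 0)
      + evalp (dl i xs) (x + t *\<^sub>R axis i 1)) (at t)"
    by (rule DERIV_add[OF DERIV_cmult[OF mnm_deriv] Cons.IH])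
  then show ?case by (cases "0 < fst p i") (simp_all add: d algebra_simps)
qed

lemma pd_evalp: "pd i (evalp xs) = evalp (dl i xs)"
proof
  fix x
  show "pd i (evalp xs) x = evalp (dl i xs) x"
    unfolding pd_def using evalp_deriv[of xs x i 0] by (simp add: DERIV_imp_deriv)
qed


lemma pd_evalp_pt[simp]: "pd i (evalp xs) x = evalp (dl i xs) x" by (simp add: pd_evalp)
lemma dl_Cons: "dl i (p#xs) = dl i [p] @ dl i xs" by (simp add: dl_def)
lemma dl_append: "dl i (xs @ ys) = dl i xs @ dl i ys" by (simp add: dl_def)
lemma dl_single: "dl i [p] = (if 0 < fst p i then [((fst p)(i := fst p i - 1), snd p * real (fst p i))] else [])"
  by (simp add: dl_def)

lemma hdeg_Nil[simp]: "hdeg k []" by (simp add: hdeg_def)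
lemma hdeg_append: "hdeg k xs \<Longrightarrow> hdeg k ys \<Longrightarrow> hdeg k (xs @ ys)" by (auto simp: hdeg_def)
lemma hdeg_scale: "hdeg k xs \<Longrightarrow> hdeg k (map (\<lambda>p. (fst p, r * snd p)) xs)" by (auto simp: hdeg_def)
lemma hdeg_mulp: "hdeg k xs \<Longrightarrow> hdeg l ys \<Longrightarrow> hdeg (k + l) (mulp xs ys)"
  by (auto simp: hdeg_def mulp_def sum.distrib)
lemma evalp_Nil_fun[simp]: "evalp [] = (\<lambda>x. 0)" by (simp add: fun_eq_iff)
lemma dl_Nil[simp]: "dl i [] = []" by (simp add: dl_def)
lemma hdeg_dl: assumes "hdeg k xs" shows "hdeg (k - 1) (dl i xs)"
  unfolding hdeg_def dl_def
proof (intro ballI)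
  fix q assume "q \<in> set (map (\<lambda>p. ((fst p)(i := fst p i - 1), snd p * real (fst p i))) (filter (\<lambda>p. 0 < fst p i) xs))"
  then obtain p where p: "p \<in> set xs" "0 < fst p i" "q = ((fst p)(i := fst p i - 1), snd p * real (fst p i))"
    by auto
  define a where "a = fst p"
  have s: "sum a UNIV = k" using assms p(1) by (auto simp: hdeg_def a_def)
  have "sum a UNIV = a i + sum a (UNIV - {i})" by (rule sum.remove) auto
  moreover have "sum (a(i := a i - 1)) UNIV = (a(i := a i - 1)) i + sum (a(i := a i - 1)) (UNIV - {i})"
    by (rule sum.remove) auto
  moreover have "sum (a(i := a i - 1)) (UNIV - {i}) = sum a (UNIV - {i})"
    by (rule sum.cong) auto
  ultimately have "sum (a(i := a i - 1)) UNIV = k - 1" using s p(2) by (simp add: a_def)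
  then show "sum (fst q) UNIV = k - 1" using p(3) by (simp add: a_def)
qed

lemma hpoly_zero[simp]: "hpoly k (\<lambda>x. 0)"
  unfolding hpoly_def by (rule exI[of _ "[]"]) (auto simp: fun_eq_iff)
lemma hpoly_add: "hpoly k f \<Longrightarrow> hpoly k g \<Longrightarrow> hpoly k (\<lambda>x. f x + g x)"
proof -
  assume "hpoly k f" "hpoly k g"
  then obtain xs ys where "hdeg k xs" "f = evalp xs" "hdeg k ys" "g = evalp ys" unfolding hpoly_def by blast
  then show ?thesis unfolding hpoly_def by (intro exI[of _ "xs @ ys"]) (auto simp: hdeg_append)
qed
lemma hpoly_cmul: "hpoly k f \<Longrightarrow> hpoly k (\<lambda>x. r * f x)"
proof -
  assume "hpoly k f"
  then obtain xs where "hdeg k xs" "f = evalp xs" unfolding hpoly_def by blast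
  then show ?thesis unfolding hpoly_def
    by (intro exI[of _ "map (\<lambda>p. (fst p, r * snd p)) xs"]) (auto simp: hdeg_scale evalp_scale)
qed
lemma hpoly_mult: "hpoly k f \<Longrightarrow> hpoly l g \<Longrightarrow> hpoly (k + l) (\<lambda>x. f x * g x)"
proof -
  assume "hpoly k f" "hpoly l g"
  then obtain xs ys where "hdeg k xs" "f = evalp xs" "hdeg l ys" "g = evalp ys" unfolding hpoly_def by blast
  then show ?thesis unfolding hpoly_def by (intro exI[of _ "mulp xs ys"]) (auto simp: hdeg_mulp evalp_mulp)
qed
lemma hpoly_neg: "hpoly k f \<Longrightarrow> hpoly k (\<lambda>x. - f x)"
  using hpoly_cmul[of k f "-1"] by simp
lemma hpoly_diff: "hpoly k f \<Longrightarrow> hpoly k g \<Longrightarrow> hpoly k (\<lambda>x. f x - g x)"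
proof -
  assume "hpoly k f" "hpoly k g"
  then have "hpoly k (\<lambda>x. f x + (- g x))" by (intro hpoly_add hpoly_neg)
  then show ?thesis by simp
qed
lemma hpoly_pd: "hpoly k f \<Longrightarrow> hpoly (k - 1) (pd i f)"
proof -
  assume "hpoly k f"
  then obtain xs where "hdeg k xs" "f = evalp xs" unfolding hpoly_def by blast
  then show ?thesis unfolding hpoly_def
    using hdeg_dl[of k xs i] by (intro exI[of _ "dl i xs"]) (auto simp: pd_evalp)
qed
lemma hpoly_const: "hpoly 0 (\<lambda>x. c)"
  unfolding hpoly_def by (rule exI[of _ "[(\<lambda>_. 0, c)]"]) (auto simp: hdeg_def fun_eq_iff)
lemma hpoly_coord: "hpoly 1 (\<lambda>x. x$i)"
  unfolding hpoly_def
  by (rule exI[of _ "[(\<lambda>j. if j = i then 1 else 0, 1)]"]) (auto simp: hdeg_def fun_eq_iff mnm_coord)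
lemma hpoly_sum: "finite S \<Longrightarrow> (\<And>j. j \<in> S \<Longrightarrow> hpoly k (f j)) \<Longrightarrow> hpoly k (\<lambda>x. \<Sum>j\<in>S. f j x)"
  by (induction S rule: finite_induct) (auto intro: hpoly_add)
lemma hpoly_cong: "hpoly k f \<Longrightarrow> (\<And>x. f x = g x) \<Longrightarrow> hpoly k g"
  by (metis ext)

lemma hpoly_deriv: "hpoly k f \<Longrightarrow>
   ((\<lambda>t. f (x + t *\<^sub>R axis i 1)) has_real_derivative pd i f (x + t *\<^sub>R axis i 1)) (at t)"
  unfolding hpoly_def using evalp_deriv by auto

lemma evalp_cont: "continuous_on UNIV (evalp xs)"
proof (induction xs)
  case Nil then show ?case by (simp add: evalp_def)
next
  case (Cons p xs)
  have "continuous_on UNIV (\<lambda>x. snd p * mnm (fst p) x + evalp xs x)"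
    unfolding mnm_def by (intro continuous_intros Cons)
  then show ?case by (simp add: evalp_def)
qed
lemma hpoly_cont: "hpoly k f \<Longrightarrow> continuous_on UNIV f"
  unfolding hpoly_def using evalp_cont by blast
lemma hpoly_isCont: "hpoly k f \<Longrightarrow> isCont f x"
  using hpoly_cont continuous_on_eq_continuous_at by blast

lemma hpoly_homog: "hpoly k f \<Longrightarrow> f (r *\<^sub>R x) = r ^ k * f x"
proof -
  assume "hpoly k f"
  then obtain xs where xs: "hdeg k xs" "f = evalp xs" unfolding hpoly_def by blast
  have "evalp xs (r *\<^sub>R x) = r ^ k * evalp xs x" using xs(1)
    by (induction xs) (auto simp: hdeg_def mnm_scale algebra_simps)
  then show ?thesis using xs by simp
qed

lemma hpoly0_pd: "hpoly 0 f \<Longrightarrow> pd i f = (\<lambda>x. 0)"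
proof -
  assume "hpoly 0 f"
  then obtain xs where xs: "hdeg 0 xs" "f = evalp xs" unfolding hpoly_def by blast
  have "dl i xs = []" using xs(1) by (auto simp: dl_def hdeg_def filter_empty_conv)
  then show ?thesis using xs by (simp add: pd_evalp)
qed

lemma euler_single:
  assumes "sum (fst p) UNIV = k"
  shows "(\<Sum>i\<in>UNIV. x$i * evalp (dl i [p]) x) = real k * (snd p * mnm (fst p) x)"
proof -
  obtain a c where p: "p = (a, c)" by (cases p)
  have "x$i * evalp (dl i [p]) x = c * real (a i) * mnm a x" for i
  proof (cases "0 < a i")
    case True
    have "x$i * mnm (a(i := a i - 1)) x = mnm a x"
      using True mnm_split[of "a(i := a i - 1)" x i] mnm_split[of a x i]
      by (simp add: power_Suc[symmetric] del: power_Suc)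
    then show ?thesis using True by (simp add: p dl_single algebra_simps)
  qed (simp add: p dl_single)
  then have "(\<Sum>i\<in>UNIV. x$i * evalp (dl i [p]) x) = (\<Sum>i\<in>UNIV. c * mnm a x * real (a i))"
    by (simp add: algebra_simps)
  also have "\<dots> = c * mnm a x * (\<Sum>i\<in>UNIV. real (a i))" by (simp add: sum_distrib_left)
  also have "(\<Sum>i\<in>UNIV. real (a i)) = real k"
  proof -
    have "sum a UNIV = k" using assms p by simp
    then show ?thesis by (metis of_nat_sum)
  qed
  finally show ?thesis by (simp add: p)
qed

lemma euler: "hpoly k f \<Longrightarrow> (\<Sum>i\<in>UNIV. x$i * pd i f x) = real k * f x"
proof -
  assume "hpoly k f"
  then obtain xs where xs: "hdeg k xs" "f = evalp xs" unfolding hpoly_def by blast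
  have "(\<Sum>i\<in>UNIV. x$i * evalp (dl i xs) x) = real k * evalp xs x" using xs(1)
  proof (induction xs)
    case Nil then show ?case by (simp add: dl_def)
  next
    case (Cons p xs)
    have "(\<Sum>i\<in>UNIV. x$i * evalp (dl i (p#xs)) x) =
       (\<Sum>i\<in>UNIV. x$i * evalp (dl i [p]) x) + (\<Sum>i\<in>UNIV. x$i * evalp (dl i xs) x)"
      by (subst dl_Cons) (simp add: algebra_simps sum.distrib)
    also have "\<dots> = real k * (snd p * mnm (fst p) x) + real k * evalp xs x"
      using Cons by (simp add: euler_single hdeg_def)
    finally show ?case by (simp add: algebra_simps)
  qed
  then show ?thesis using xs by simp
qed

lemma dl_comm_single: "evalp (dl i (dl j [p])) x = evalp (dl j (dl i [p])) x"
proof -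
  obtain a c where p: "p = (a, c)" by (cases p)
  show ?thesis
  proof (cases "i = j")
    case False
    have e: "(a(j := a j - Suc 0))(i := a i - Suc 0) = (a(i := a i - Suc 0))(j := a j - Suc 0)"
      using False by (auto simp: fun_eq_iff)
    show ?thesis using False by (simp add: p dl_single e algebra_simps)
  qed (simp)
qed

lemma dl_comm: "evalp (dl i (dl j xs)) x = evalp (dl j (dl i xs)) x"
proof (induction xs)
  case Nil then show ?case by (simp add: dl_def)
next
  case (Cons p xs)
  then show ?case
    by (subst (1 2) dl_Cons) (simp add: dl_append dl_comm_single)
qed

lemma pd_comm: "hpoly k f \<Longrightarrow> pd i (pd j f) = pd j (pd i f)"
proof -
  assume "hpoly k f"
  then obtain xs where xs: "f = evalp xs" unfolding hpoly_def by blast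
  have "pd i (pd j (evalp xs)) = pd j (pd i (evalp xs))" by (simp add: pd_evalp fun_eq_iff dl_comm)
  then show ?thesis using xs by simp
qed

definition cf :: "(('n \<Rightarrow> nat) \<times> real) list \<Rightarrow> ('n \<Rightarrow> nat) \<Rightarrow> real" where
  "cf xs a = sum_list (map snd (filter (\<lambda>p. fst p = a) xs))"

lemma evalp_cf: "finite A \<Longrightarrow> fst ` set xs \<subseteq> A \<Longrightarrow> evalp xs x = (\<Sum>a\<in>A. cf xs a * mnm a x)"
proof (induction xs)
  case Nil then show ?case by (simp add: cf_def)
next
  case (Cons p xs)
  have cfc: "cf (p#xs) a = (if fst p = a then snd p else 0) + cf xs a" for a
    by (simp add: cf_def)
  have "(\<Sum>a\<in>A. cf (p#xs) a * mnm a x) = (\<Sum>a\<in>A. (if fst p = a then snd p * mnm a x else 0)) + (\<Sum>a\<in>A. cf xs a * mnm a x)"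
    unfolding cfc by (simp add: distrib_right sum.distrib if_distrib[of "\<lambda>u. u * mnm _ x"] cong: if_cong)
  also have "(\<Sum>a\<in>A. (if fst p = a then snd p * mnm a x else 0)) = snd p * mnm (fst p) x"
    using Cons.prems by (simp add: sum.delta)
  finally show ?case using Cons by simp
qed

lemma hom_poly_iff: "hom_poly k f \<longleftrightarrow> hpoly k f"
proof
  assume "hom_poly k f"
  then obtain c :: "('a \<Rightarrow> nat) \<Rightarrow> real" where c: "finite {a. c a \<noteq> 0}" "\<forall>a. c a \<noteq> 0 \<longrightarrow> sum a UNIV = k"
    "\<forall>x. f x = (\<Sum>a\<in>{a. c a \<noteq> 0}. c a * (\<Prod>i\<in>UNIV. (x $ i) ^ a i))"
    unfolding hom_poly_def by blast
  obtain ys where ys: "set ys = {a. c a \<noteq> 0}" "distinct ys" using finite_distinct_list[OF c(1)] by blast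
  define xs where "xs = map (\<lambda>a. (a, c a)) ys"
  have "hdeg k xs" using c(2) ys by (auto simp: hdeg_def xs_def)
  moreover have "f x = evalp xs x" for x
  proof -
    have "evalp xs x = sum_list (map (\<lambda>a. c a * mnm a x) ys)"
      by (simp add: xs_def evalp_def o_def)
    also have "\<dots> = (\<Sum>a\<in>{a. c a \<noteq> 0}. c a * mnm a x)"
      using ys by (simp add: sum_list_distinct_conv_sum_set)
    finally show ?thesis using c(3) by (simp add: mnm_def)
  qed
  ultimately show "hpoly k f" unfolding hpoly_def by blast
next
  assume "hpoly k f"
  then obtain xs where xs: "hdeg k xs" "f = evalp xs" unfolding hpoly_def by blast
  define c where "c = cf xs"
  have sub: "{a. c a \<noteq> 0} \<subseteq> fst ` set xs"
  proof
    fix a assume "a \<in> {a. c a \<noteq> 0}"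
    then have "filter (\<lambda>p. fst p = a) xs \<noteq> []" by (auto simp: c_def cf_def)
    then show "a \<in> fst ` set xs" by (auto simp: filter_empty_conv)
  qed
  have fin: "finite {a. c a \<noteq> 0}" using sub finite_surj by blast
  have deg: "\<forall>a. c a \<noteq> 0 \<longrightarrow> sum a UNIV = k" using sub xs(1) by (auto simp: hdeg_def)
  have "f x = (\<Sum>a\<in>{a. c a \<noteq> 0}. c a * (\<Prod>i\<in>UNIV. (x $ i) ^ a i))" for x
  proof -
    have "f x = (\<Sum>a\<in>fst ` set xs. c a * mnm a x)" using xs evalp_cf[of "fst ` set xs" xs x] by (simp add: c_def)
    also have "\<dots> = (\<Sum>a\<in>{a. c a \<noteq> 0}. c a * mnm a x)"
      by (rule sum.mono_neutral_right) (use sub in auto)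
    finally show ?thesis by (simp add: mnm_def)
  qed
  then show "hom_poly k f" unfolding hom_poly_def using fin deg by blast
qed


lemma nv_norm: "x \<noteq> 0 \<Longrightarrow> norm (x /\<^sub>R norm x) = 1"
  by simp

lemma nv_int:
  fixes f :: "real^'n \<Rightarrow> 'b::euclidean_space"
  assumes f: "continuous_on UNIV f" and S: "S \<in> lmeasurable"
  shows "(\<lambda>x. f (x /\<^sub>R norm x)) integrable_on S"
proof -
  have c: "continuous_on (S - {0}) (\<lambda>x. f (x /\<^sub>R norm x))"
    by (intro continuous_on_compose2[OF f] continuous_intros) auto
  have "compact (f ` cball 0 1)" by (intro compact_continuous_image continuous_on_subset[OF f]) auto
  then obtain M where M: "\<And>y. y \<in> cball 0 1 \<Longrightarrow> norm (f y) \<le> M"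
    using compact_imp_bounded bounded_iff by (metis image_eqI)
  have S0: "S - {0} \<in> lmeasurable" using S by (simp add: fmeasurable_Diff)
  have "(\<lambda>x. f (x /\<^sub>R norm x)) integrable_on (S - {0})"
  proof (rule measurable_bounded_by_integrable_imp_integrable[where g = "\<lambda>_. M"])
    show "(\<lambda>x. f (x /\<^sub>R norm x)) \<in> borel_measurable (lebesgue_on (S - {0}))"
      by (rule continuous_imp_measurable_on_sets_lebesgue[OF c]) (use S0 in auto)
    show "(\<lambda>_. M) integrable_on S - {0}" using S0 by (rule integrable_on_const)
    show "norm (f (x /\<^sub>R norm x)) \<le> M" if "x \<in> S - {0}" for x
      using that by (intro M) (simp)
    show "S - {0} \<in> sets lebesgue" using S0 by auto
  qed
  then show ?thesis
    by (rule integrable_spike_set) (auto intro: negligible_subset[of "{0}"])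
qed

lemma nv_int_ball: "continuous_on UNIV (f :: real^'n \<Rightarrow> 'b::euclidean_space) \<Longrightarrow> (\<lambda>x. f (x /\<^sub>R norm x)) integrable_on ball (0::real^'n) r"
  by (rule nv_int) auto

lemma cont_int:
  fixes f :: "real^'n \<Rightarrow> 'b::euclidean_space"
  assumes f: "continuous_on UNIV f" and S: "S \<in> lmeasurable" and bS: "bounded S"
  shows "f integrable_on S"
proof -
  have "compact (f ` closure S)" by (intro compact_continuous_image continuous_on_subset[OF f]) (auto simp: bS)
  then obtain M where M: "\<And>y. y \<in> closure S \<Longrightarrow> norm (f y) \<le> M"
    using compact_imp_bounded bounded_iff by (metis image_eqI)
  show ?thesis
  proof (rule measurable_bounded_by_integrable_imp_integrable[where g = "\<lambda>_. M"])
    show "f \<in> borel_measurable (lebesgue_on S)"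
      by (rule continuous_imp_measurable_on_sets_lebesgue[OF continuous_on_subset[OF f]]) (use S in auto)
    show "(\<lambda>_. M) integrable_on S" using S by (rule integrable_on_const)
    show "norm (f x) \<le> M" if "x \<in> S" for x
      using that closure_subset by (intro M) auto
    show "S \<in> sets lebesgue" using S by auto
  qed
qed

lemma cont_int_ball: "continuous_on UNIV (f :: real^'n \<Rightarrow> 'b::euclidean_space) \<Longrightarrow> f integrable_on ball 0 r"
  by (rule cont_int) auto

lemma Av_add: "continuous_on UNIV f \<Longrightarrow> continuous_on UNIV g \<Longrightarrow>
   Av (\<lambda>x. f x + g x) = Av f + (Av g :: 'b::euclidean_space)"
  unfolding Av_def by (simp add: integral_add nv_int_ball scaleR_add_right)

lemma Av_diff: "continuous_on UNIV f \<Longrightarrow> continuous_on UNIV g \<Longrightarrow>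
   Av (\<lambda>x. f x - g x) = Av f - (Av g :: 'b::euclidean_space)"
  unfolding Av_def by (simp add: integral_diff nv_int_ball scaleR_diff_right)

lemma Av_cmul: "Av (\<lambda>x. c * f x) = c * (Av f :: real)"
  unfolding Av_def by simp

lemma Av_scaleR: "Av (\<lambda>x. c *\<^sub>R f x) = c *\<^sub>R (Av f :: 'b::euclidean_space)"
  unfolding Av_def by (simp add: scaleR_scaleR mult.commute)

lemma Av_sum: "finite S \<Longrightarrow> (\<And>j. j \<in> S \<Longrightarrow> continuous_on UNIV (f j)) \<Longrightarrow>
   Av (\<lambda>x. \<Sum>j\<in>S. f j x) = (\<Sum>j\<in>S. Av (f j) :: 'b::euclidean_space)"
proof (induction S rule: finite_induct)
  case empty then show ?case by (simp add: Av_def)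
next
  case (insert a S)
  have "Av (\<lambda>x. \<Sum>j\<in>insert a S. f j x) = Av (\<lambda>x. f a x + (\<Sum>j\<in>S. f j x))"
    using insert by simp
  also have "\<dots> = Av (f a) + Av (\<lambda>x. \<Sum>j\<in>S. f j x)"
    using insert by (intro Av_add) (auto intro!: continuous_intros)
  finally show ?case using insert by simp
qed

lemma Av_cong: "(\<And>y. norm y = 1 \<Longrightarrow> f y = g y) \<Longrightarrow> Av f = Av g"
  unfolding Av_def
  by (rule arg_cong[where f = "\<lambda>u. u /\<^sub>R _"], rule integral_spike[of "{0}"]) auto

lemma measure_ball_pos: "0 < measure lborel (ball (0::real^'n) 1)"
  using content_ball_pos[of 1 "0::real^'n"] by simp

lemma Av_mono: "continuous_on UNIV f \<Longrightarrow> continuous_on UNIV g \<Longrightarrow> (\<And>y. norm y = 1 \<Longrightarrow> f y \<le> g y) \<Longrightarrow>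
    Av f \<le> (Av g :: real)"
proof -
  assume f: "continuous_on UNIV f" and g: "continuous_on UNIV g" and le: "\<And>y. norm y = 1 \<Longrightarrow> f y \<le> g y"
  have e: "integral (ball 0 1 - {0}) h = integral (ball (0::real^'a) 1) h" for h :: "real^'a \<Rightarrow> real"
    by (rule integral_subset_negligible) (auto intro: negligible_subset[of "{0}"])
  have "integral (ball 0 1 - {0}) (\<lambda>x. f (x /\<^sub>R norm x)) \<le> integral (ball 0 1 - {0}) (\<lambda>x. g (x /\<^sub>R norm x))"
    by (intro integral_le nv_int f g le) (auto simp: fmeasurable_Diff)
  then have "integral (ball (0::real^'a) 1) (\<lambda>x. f (x /\<^sub>R norm x)) \<le> integral (ball 0 1) (\<lambda>x. g (x /\<^sub>R norm x))"
    by (simp add: e)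
  then show ?thesis unfolding Av_def using measure_ball_pos
    by (simp add: divide_inverse[symmetric] divide_right_mono)
qed

lemma Av_nonneg: "continuous_on UNIV f \<Longrightarrow> (\<And>y. norm y = 1 \<Longrightarrow> 0 \<le> f y) \<Longrightarrow> 0 \<le> (Av f :: real)"
  using Av_mono[of "\<lambda>x. 0" f] by (simp add: Av_def)

lemma Av_component: "continuous_on UNIV (f :: real^'n \<Rightarrow> real^'m) \<Longrightarrow> Av f $ j = Av (\<lambda>x. f x $ j)"
  unfolding Av_def using integral_component_eq_cart[OF nv_int_ball[of f 1], of j] by simp


lemma ball_sub_cbox: "r > 0 \<Longrightarrow> ball (0::real^'n) r \<subseteq> cbox (- vec r) (vec r)"
proof
  fix x :: "real^'n" assume "r > 0" "x \<in> ball 0 r"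
  then have "norm x < r" by simp
  then have "\<bar>x$i\<bar> \<le> r" for i using component_le_norm_cart[of x i] by linarith
  then have "- r \<le> x$i \<and> x$i \<le> r" for i by (simp add: abs_le_iff) (meson \<open>\<bar>x$i\<bar> \<le> r\<close> abs_le_D2 minus_le_iff)
  then show "x \<in> cbox (- vec r) (vec r)" unfolding mem_box_cart by simp
qed

lemma ball_scale:
  fixes g :: "real^'n \<Rightarrow> real"
  assumes g: "g integrable_on ball 0 r" and r: "r > 0"
  shows "integral (ball 0 1) (\<lambda>x. g (r *\<^sub>R x)) = integral (ball 0 r) g / r ^ CARD('n)"
proof -
  define K where "K = cbox (- vec r) (vec r :: real^'n)"
  define g' where "g' = (\<lambda>x. if x \<in> ball 0 r then g x else 0)"
  have sub: "ball 0 r \<subseteq> K" unfolding K_def using r by (rule ball_sub_cbox)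
  have bK: "ball 0 r \<inter> K = ball 0 r" using sub by auto
  have "g' integrable_on K" unfolding g'_def by (subst integrable_restrict_Int) (simp add: bK g)
  then have "(g' has_integral integral K g') K" by (rule integrable_integral)
  moreover have IK: "integral K g' = integral (ball 0 r) g" unfolding g'_def
    by (subst integral_restrict_Int) (simp add: bK)
  ultimately have hK: "(g' has_integral integral (ball 0 r) g) K" by simp
  define T where "T = (\<lambda>x. (1 / r) *\<^sub>R x + - ((1 / r) *\<^sub>R 0)) ` K"
  have "((\<lambda>x. g' (r *\<^sub>R x + 0)) has_integral (1 / (\<bar>r\<bar> ^ DIM(real^'n))) *\<^sub>R integral (ball 0 r) g) T"
    unfolding T_def K_def using hK r unfolding K_def by (intro has_integral_affinity) auto
  then have hT: "((\<lambda>x. g' (r *\<^sub>R x)) has_integral integral (ball 0 r) g / r ^ CARD('n)) T"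
    using r by (simp add: divide_inverse mult.commute)
  have ballT: "ball 0 1 \<subseteq> T"
  proof
    fix x :: "real^'n" assume "x \<in> ball 0 1"
    then have "r *\<^sub>R x \<in> ball 0 r" using r by (simp add: norm_scaleR)
    then have "r *\<^sub>R x \<in> K" using sub by auto
    moreover have "x = (1 / r) *\<^sub>R (r *\<^sub>R x) + - ((1 / r) *\<^sub>R 0)" using r by simp
    ultimately show "x \<in> T" unfolding T_def by blast
  qed
  have g'eq: "g' (r *\<^sub>R x) = (if x \<in> ball 0 1 then g (r *\<^sub>R x) else 0)" for x
    unfolding g'_def using r by (simp add: norm_scaleR)
  have "integral T (\<lambda>x. g' (r *\<^sub>R x)) = integral (ball 0 1 \<inter> T) (\<lambda>x. g (r *\<^sub>R x))"
    unfolding g'eq by (rule integral_restrict_Int)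
  also have "ball 0 1 \<inter> T = ball 0 1" using ballT by auto
  finally show ?thesis using hT by (simp add: integral_unique)
qed

lemma nv_int2:
  fixes f h :: "real^'n \<Rightarrow> real"
  assumes f: "continuous_on UNIV f" and h: "continuous_on UNIV h"
  shows "(\<lambda>x. h x * f (x /\<^sub>R norm x)) integrable_on ball 0 r"
proof -
  have c: "continuous_on (ball 0 r - {0}) (\<lambda>x. h x * f (x /\<^sub>R norm x))"
    by (intro continuous_intros continuous_on_compose2[OF f] continuous_on_subset[OF h]) auto
  have "compact (f ` cball 0 1)" by (intro compact_continuous_image continuous_on_subset[OF f]) auto
  then obtain M where M: "\<And>y. y \<in> cball 0 1 \<Longrightarrow> norm (f y) \<le> M"
    using compact_imp_bounded bounded_iff by (metis image_eqI)
  have "compact (h ` cball 0 r)" by (intro compact_continuous_image continuous_on_subset[OF h]) auto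
  then obtain N where N: "\<And>y. y \<in> cball 0 r \<Longrightarrow> norm (h y) \<le> N"
    using compact_imp_bounded bounded_iff by (metis image_eqI)
  have S0: "ball 0 r - {0} \<in> lmeasurable" by (simp add: fmeasurable_Diff)
  have "(\<lambda>x. h x * f (x /\<^sub>R norm x)) integrable_on (ball 0 r - {0})"
  proof (rule measurable_bounded_by_integrable_imp_integrable[where g = "\<lambda>_. N * M"])
    show "(\<lambda>x. h x * f (x /\<^sub>R norm x)) \<in> borel_measurable (lebesgue_on (ball 0 r - {0}))"
      by (rule continuous_imp_measurable_on_sets_lebesgue[OF c]) (use S0 in auto)
    show "(\<lambda>_. N * M) integrable_on ball 0 r - {0}" using S0 by (rule integrable_on_const)
    show "norm (h x * f (x /\<^sub>R norm x)) \<le> N * M" if "x \<in> ball 0 r - {0}" for x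
    proof -
      have "norm (h x) \<le> N" using that by (intro N) auto
      moreover have "norm (f (x /\<^sub>R norm x)) \<le> M" using that by (intro M) auto
      ultimately show ?thesis by (simp add: abs_mult mult_mono')
    qed
    show "ball 0 r - {0} \<in> sets lebesgue" using S0 by auto
  qed
  then show ?thesis
    by (rule integrable_spike_set) (auto intro: negligible_subset[of "{0}"])
qed

lemma limit_ge1:
  fixes g :: "real \<Rightarrow> real"
  assumes "isCont g 1" and "\<And>r. r > 1 \<Longrightarrow> 0 \<le> g r"
  shows "0 \<le> g 1"
proof (rule tendsto_lowerbound)
  show "(g \<longlongrightarrow> g 1) (at_right 1)"
    using assms(1) by (simp add: isCont_def filterlim_at_split)
  show "\<forall>\<^sub>F x in at_right 1. 0 \<le> g x"
    using eventually_at_right_less[of 1] by eventually_elim (use assms(2) in auto)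
qed simp

lemma radial_nonneg:
  fixes f :: "real^'n \<Rightarrow> real"
  assumes f: "continuous_on UNIV f" and nn: "\<And>y. 0 \<le> f y"
  shows "real (CARD('n) + p) * integral (ball 0 1) (\<lambda>x. norm x ^ p * f (x /\<^sub>R norm x))
       = real CARD('n) * integral (ball 0 1) (\<lambda>x. f (x /\<^sub>R norm x))"
proof -
  define n where "n = CARD('n)"
  define \<Phi> where "\<Phi> r = integral (ball 0 r) (\<lambda>x. f (x /\<^sub>R norm x))" for r
  define J where "J r = integral (ball 0 r) (\<lambda>x. norm x ^ p * f (x /\<^sub>R norm x))" for r
  have intP: "(\<lambda>x. f (x /\<^sub>R norm x)) integrable_on ball 0 r" for r by (rule nv_int_ball[OF f])
  have intJ: "(\<lambda>x. norm x ^ p * f (x /\<^sub>R norm x)) integrable_on ball 0 r" for r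
    by (rule nv_int2[OF f]) (intro continuous_intros)
  have nvs: "(r *\<^sub>R x) /\<^sub>R norm (r *\<^sub>R x) = x /\<^sub>R norm x" if "r > 0" for r and x :: "real^'n"
    using that by (cases "x = 0") (auto simp: norm_scaleR)
  have sP: "\<Phi> r = r ^ n * \<Phi> 1" if r: "r > 0" for r
  proof -
    have "integral (ball 0 1) (\<lambda>x. f ((r *\<^sub>R x) /\<^sub>R norm (r *\<^sub>R x))) = \<Phi> r / r ^ n"
      unfolding \<Phi>_def n_def using ball_scale[OF intP r] by simp
    then show ?thesis using r nvs[OF r] by (simp add: \<Phi>_def field_simps)
  qed
  have sJ: "J r = r ^ (n + p) * J 1" if r: "r > 0" for r
  proof -
    have "integral (ball 0 1) (\<lambda>x. norm (r *\<^sub>R x) ^ p * f ((r *\<^sub>R x) /\<^sub>R norm (r *\<^sub>R x))) = J r / r ^ n"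
      unfolding J_def n_def using ball_scale[OF intJ r] by simp
    moreover have "integral (ball 0 1) (\<lambda>x. norm (r *\<^sub>R x) ^ p * f ((r *\<^sub>R x) /\<^sub>R norm (r *\<^sub>R x)))
        = r ^ p * J 1"
      unfolding J_def using r
      by (simp only: nvs[OF r]) (simp add: norm_scaleR power_mult_distrib mult.assoc)
    ultimately show ?thesis using r by (simp add: field_simps power_add)
  qed
  have ineq: "(r ^ n - 1) * \<Phi> 1 \<le> (r ^ (n + p) - 1) * J 1 \<and> (r ^ (n + p) - 1) * J 1 \<le> r ^ p * ((r ^ n - 1) * \<Phi> 1)"
    if r: "r > 1" for r
  proof -
    define A where "A = (\<lambda>x::real^'n. if x \<in> ball 0 1 then 0 else f (x /\<^sub>R norm x))"
    define B where "B = (\<lambda>x::real^'n. if x \<in> ball 0 1 then 0 else norm x ^ p * f (x /\<^sub>R norm x))"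
    have b1: "ball 0 1 \<inter> ball (0::real^'n) r = ball 0 1" using r by auto
    have R1: "integral (ball 0 r) (\<lambda>x. if x \<in> ball 0 1 then F x else 0) = integral (ball 0 1) F" for F :: "real^'n \<Rightarrow> real"
      by (subst integral_restrict_Int) (simp add: b1)
    have I1: "(\<lambda>x. if x \<in> ball 0 1 then F x else 0) integrable_on ball 0 r" if "F integrable_on ball 0 1" for F :: "real^'n \<Rightarrow> real"
      by (subst integrable_restrict_Int) (simp add: b1 that)
    have Aeq: "A = (\<lambda>x. f (x /\<^sub>R norm x) - (if x \<in> ball 0 1 then f (x /\<^sub>R norm x) else 0))"
      unfolding A_def by (auto simp: fun_eq_iff)
    have Beq: "B = (\<lambda>x. norm x ^ p * f (x /\<^sub>R norm x) - (if x \<in> ball 0 1 then norm x ^ p * f (x /\<^sub>R norm x) else 0))"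
      unfolding B_def by (auto simp: fun_eq_iff)
    have PA: "integral (ball 0 r) A = \<Phi> r - \<Phi> 1"
      unfolding Aeq \<Phi>_def by (simp only: integral_diff[OF intP I1[OF intP]] R1)
    have JB: "integral (ball 0 r) B = J r - J 1"
      unfolding Beq J_def by (simp only: integral_diff[OF intJ I1[OF intJ]] R1)
    have iA: "A integrable_on ball 0 r"
      unfolding Aeq by (rule integrable_diff[OF intP I1[OF intP]])
    have iB: "B integrable_on ball 0 r"
      unfolding Beq by (rule integrable_diff[OF intJ I1[OF intJ]])
    have le1: "A x \<le> B x" if "x \<in> ball 0 r" for x
    proof (cases "x \<in> ball 0 1")
      case False
      then have "1 \<le> norm x" by simp
      then have "1 \<le> norm x ^ p" by (simp add: one_le_power)
      then show ?thesis using False nn[of "x /\<^sub>R norm x"] by (simp add: A_def B_def mult_le_cancel_right1)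
    qed (simp add: A_def B_def)
    have le2: "B x \<le> r ^ p * A x" if "x \<in> ball 0 r" for x
    proof (cases "x \<in> ball 0 1")
      case False
      have "norm x ^ p \<le> r ^ p" using that by (intro power_mono) auto
      then show ?thesis using False nn[of "x /\<^sub>R norm x"] by (simp add: A_def B_def mult_right_mono)
    qed (simp add: A_def B_def)
    have "integral (ball 0 r) A \<le> integral (ball 0 r) B" by (rule integral_le[OF iA iB le1])
    moreover have "integral (ball 0 r) B \<le> integral (ball 0 r) (\<lambda>x. r ^ p * A x)"
    proof (rule integral_le[OF iB _ le2])
      show "(\<lambda>x. r ^ p * A x) integrable_on ball 0 r" using integrable_cmul[OF iA, of "r^p"] by simp
    qed
    ultimately have "\<Phi> r - \<Phi> 1 \<le> J r - J 1 \<and> J r - J 1 \<le> r ^ p * (\<Phi> r - \<Phi> 1)"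
      by (simp add: PA JB)
    then show ?thesis using sP[of r] sJ[of r] r by (simp add: algebra_simps)
  qed
  define S where "S m r = (\<Sum>i<m. r ^ i :: real)" for m r
  have S1: "S m 1 = real m" for m by (simp add: S_def)
  have Sc: "isCont (\<lambda>r. S m r) x" for m x unfolding S_def by (intro continuous_intros)
  have pd: "r ^ m - 1 = (r - 1) * S m r" for m r unfolding S_def by (rule power_diff_1_eq)
  have i1: "0 \<le> S (n + p) r * J 1 - S n r * \<Phi> 1" if "r > 1" for r
  proof -
    have "(r - 1) * (S n r * \<Phi> 1) \<le> (r - 1) * (S (n + p) r * J 1)"
      using ineq[OF that] by (simp add: pd mult.assoc)
    then show ?thesis using that by (simp add: mult_le_cancel_left)
  qed
  have i2: "0 \<le> r ^ p * (S n r * \<Phi> 1) - S (n + p) r * J 1" if "r > 1" for r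
  proof -
    have "(r - 1) * (S (n + p) r * J 1) \<le> (r - 1) * (r ^ p * (S n r * \<Phi> 1))"
      using ineq[OF that] by (simp add: pd mult.assoc mult.left_commute)
    then show ?thesis using that by (simp add: mult_le_cancel_left)
  qed
  have "0 \<le> S (n + p) 1 * J 1 - S n 1 * \<Phi> 1"
    by (rule limit_ge1[where g = "\<lambda>r. S (n + p) r * J 1 - S n r * \<Phi> 1"], (intro continuous_intros Sc), erule i1)
  moreover have "0 \<le> 1 ^ p * (S n 1 * \<Phi> 1) - S (n + p) 1 * J 1"
    by (rule limit_ge1[where g = "\<lambda>r. r ^ p * (S n r * \<Phi> 1) - S (n + p) r * J 1"], (intro continuous_intros Sc), erule i2)
  ultimately have "S (n + p) 1 * J 1 = S n 1 * \<Phi> 1" by simp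
  then show ?thesis by (simp add: S1 J_def \<Phi>_def n_def)
qed

lemma radial:
  fixes f :: "real^'n \<Rightarrow> real"
  assumes f: "continuous_on UNIV f"
  shows "real (CARD('n) + p) * integral (ball 0 1) (\<lambda>x. norm x ^ p * f (x /\<^sub>R norm x))
       = real CARD('n) * integral (ball 0 1) (\<lambda>x. f (x /\<^sub>R norm x))"
proof -
  define f1 where "f1 y = max (f y) 0" for y
  define f2 where "f2 y = max (- f y) 0" for y
  have c1: "continuous_on UNIV f1" unfolding f1_def by (intro continuous_intros f)
  have c2: "continuous_on UNIV f2" unfolding f2_def by (intro continuous_intros f)
  have fe: "f y = f1 y - f2 y" for y by (simp add: f1_def f2_def max_def)
  have r1: "real (CARD('n) + p) * integral (ball 0 1) (\<lambda>x. norm x ^ p * f1 (x /\<^sub>R norm x))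
       = real CARD('n) * integral (ball 0 1) (\<lambda>x. f1 (x /\<^sub>R norm x))"
    by (rule radial_nonneg[OF c1]) (simp add: f1_def)
  have r2: "real (CARD('n) + p) * integral (ball 0 1) (\<lambda>x. norm x ^ p * f2 (x /\<^sub>R norm x))
       = real CARD('n) * integral (ball 0 1) (\<lambda>x. f2 (x /\<^sub>R norm x))"
    by (rule radial_nonneg[OF c2]) (simp add: f2_def)
  have np: "continuous_on UNIV (\<lambda>x::real^'n. norm x ^ p)" by (intro continuous_intros)
  have e1: "integral (ball 0 1) (\<lambda>x. norm x ^ p * f (x /\<^sub>R norm x)) =
      integral (ball 0 1) (\<lambda>x. norm x ^ p * f1 (x /\<^sub>R norm x)) - integral (ball 0 1) (\<lambda>x. norm x ^ p * f2 (x /\<^sub>R norm x))"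
    unfolding fe right_diff_distrib by (rule integral_diff[OF nv_int2[OF c1 np] nv_int2[OF c2 np]])
  have e2: "integral (ball 0 1) (\<lambda>x. f (x /\<^sub>R norm x)) =
      integral (ball 0 1) (\<lambda>x. f1 (x /\<^sub>R norm x)) - integral (ball 0 1) (\<lambda>x. f2 (x /\<^sub>R norm x))"
    unfolding fe by (rule integral_diff[OF nv_int_ball[OF c1] nv_int_ball[OF c2]])
  show ?thesis unfolding e1 e2 using r1 r2 by (simp add: right_diff_distrib)
qed

lemma radial_hpoly:
  fixes h :: "real^'n \<Rightarrow> real"
  assumes h: "hpoly m h"
  shows "real (CARD('n) + 2 * j + m) * integral (ball 0 1) (\<lambda>x. (x \<bullet> x) ^ j * h x)
       = real CARD('n) * integral (ball 0 1) (\<lambda>x. h (x /\<^sub>R norm x))"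
proof -
  have "integral (ball 0 1) (\<lambda>x. (x \<bullet> x) ^ j * h x) = integral (ball 0 1) (\<lambda>x. norm x ^ (2 * j + m) * h (x /\<^sub>R norm x))"
  proof (rule integral_spike[of "{0}"])
    fix x :: "real^'n" assume "x \<in> ball 0 1 - {0}"
    then have x: "x \<noteq> 0" by auto
    have "h x = h (norm x *\<^sub>R (x /\<^sub>R norm x))" using x by simp
    also have "\<dots> = norm x ^ m * h (x /\<^sub>R norm x)" by (rule hpoly_homog[OF h])
    finally show "norm x ^ (2 * j + m) * h (x /\<^sub>R norm x) = (x \<bullet> x) ^ j * h x"
      by (simp add: power_add power_mult dot_square_norm)
  qed auto
  then show ?thesis using radial[OF hpoly_cont[OF h], of "2 * j + m"] by (simp add: add.assoc)
qed


definition psi :: "real \<Rightarrow> real" where "psi u = (max 0 u)^2"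

lemma psi_deriv: "(psi has_real_derivative 2 * max 0 u) (at u)"
proof (cases "u < 0")
  case True
  have "((\<lambda>_. 0) has_real_derivative 2 * max 0 u) (at u)" using True by simp
  then show ?thesis
    by (rule has_field_derivative_transform_within_open[where S = "{..<0}"]) (use True in \<open>auto simp: psi_def\<close>)
next
  case False
  show ?thesis
  proof (cases "u > 0")
    case True
    have "((\<lambda>v. v^2) has_real_derivative 2 * u) (at u)" by (auto intro!: derivative_eq_intros)
    then have "((\<lambda>v. v^2) has_real_derivative 2 * max 0 u) (at u)" using True by simp
    then show ?thesis
      by (rule has_field_derivative_transform_within_open[where S = "{0<..}"]) (use True in \<open>auto simp: psi_def\<close>)
  next
    case False
    with \<open>\<not> u < 0\<close> have u: "u = 0" by simp
    have "((\<lambda>h. (psi (0 + h) - psi 0) / h) \<longlongrightarrow> 0) (at 0)"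
    proof (rule Lim_null_comparison)
      show "\<forall>\<^sub>F h in at 0. norm ((psi (0 + h) - psi 0) / h) \<le> norm h"
      proof (rule always_eventually, intro allI)
        fix h :: real
        show "norm ((psi (0 + h) - psi 0) / h) \<le> norm h"
        proof (cases "h > 0")
          case True then show ?thesis by (simp add: psi_def power2_eq_square)
        next
          case False then show ?thesis by (simp add: psi_def max_def)
        qed
      qed
      show "((\<lambda>h. norm h) \<longlongrightarrow> 0) (at (0::real))" by (intro tendsto_eq_intros) auto
    qed
    then show ?thesis using u by (simp add: DERIV_def)
  qed
qed

lemma psi_cont: "continuous_on UNIV psi"
  unfolding psi_def by (intro continuous_intros)

definition FF :: "(real^'n \<Rightarrow> real) \<Rightarrow> real^'n \<Rightarrow> real" where
  "FF G x = G x * psi (1 - x \<bullet> x)"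

definition DFF :: "'n \<Rightarrow> (real^'n \<Rightarrow> real) \<Rightarrow> real^'n \<Rightarrow> real" where
  "DFF i G x = pd i G x * psi (1 - x \<bullet> x) + G x * (2 * max 0 (1 - x \<bullet> x)) * (- 2 * x$i)"

lemma line_inner: "(x + t *\<^sub>R axis i 1) \<bullet> (x + t *\<^sub>R axis i 1) = x \<bullet> x + 2 * t * x$i + t^2"
  by (simp add: inner_add_left inner_add_right inner_axis inner_axis' inner_axis_axis power2_eq_square
      algebra_simps inner_commute)

lemma FF_deriv:
  assumes G: "hpoly d G"
  shows "((\<lambda>t. FF G (x + t *\<^sub>R axis i 1)) has_real_derivative DFF i G (x + t *\<^sub>R axis i 1)) (at t)"
proof -
  have e: "FF G (x + s *\<^sub>R axis i 1) = G (x + s *\<^sub>R axis i 1) * psi (1 - (x \<bullet> x + 2 * s * x$i + s^2))" for s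
    by (simp add: FF_def line_inner)
  have d1: "((\<lambda>s. 1 - (x \<bullet> x + 2 * s * x$i + s^2)) has_real_derivative - (2 * x$i + 2 * t)) (at t)"
    by (auto intro!: derivative_eq_intros)
  have d2: "((\<lambda>s. psi (1 - (x \<bullet> x + 2 * s * x$i + s^2))) has_real_derivative
      2 * max 0 (1 - (x \<bullet> x + 2 * t * x$i + t^2)) * (- (2 * x$i + 2 * t))) (at t)"
    by (rule DERIV_chain2[OF psi_deriv d1])
  have "((\<lambda>s. G (x + s *\<^sub>R axis i 1) * psi (1 - (x \<bullet> x + 2 * s * x$i + s^2))) has_real_derivative
      pd i G (x + t *\<^sub>R axis i 1) * psi (1 - (x \<bullet> x + 2 * t * x$i + t^2)) +
      (2 * max 0 (1 - (x \<bullet> x + 2 * t * x$i + t^2)) * (- (2 * x$i + 2 * t))) * G (x + t *\<^sub>R axis i 1)) (at t)"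
    by (rule DERIV_mult[OF hpoly_deriv[OF G] d2])
  moreover have "(x + t *\<^sub>R axis i 1) $ i = x$i + t" by (simp add: axis_def)
  ultimately have D: "((\<lambda>s. FF G (x + s *\<^sub>R axis i 1)) has_real_derivative
      pd i G (x + t *\<^sub>R axis i 1) * psi (1 - (x \<bullet> x + 2 * t * x$i + t^2)) +
      (2 * max 0 (1 - (x \<bullet> x + 2 * t * x$i + t^2)) * (- (2 * x$i + 2 * t))) * G (x + t *\<^sub>R axis i 1)) (at t)"
    unfolding e by simp
  have key: "\<And>A B C P. A * B + (2 * C * (-(2 * xi + 2 * t))) * P = A * B + P * (2 * C) * (-2 * (xi + t))"
    for xi :: real by (simp add: algebra_simps)
  have yi: "(x + t *\<^sub>R axis i 1) $ i = x$i + t" by (simp add: axis_def)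
  show ?thesis
    by (rule DERIV_cong[OF D]) (simp only: DFF_def line_inner yi key)
qed

lemma FF_cont: "hpoly d G \<Longrightarrow> continuous_on UNIV (FF G)"
  unfolding FF_def psi_def by (intro continuous_intros hpoly_cont)

lemma DFF_cont: assumes G: "hpoly d G" shows "continuous_on UNIV (DFF i G)"
  unfolding DFF_def psi_def
  by (intro continuous_intros hpoly_cont[OF hpoly_pd[OF G]] hpoly_cont[OF G])

lemma out_ball: "1 \<le> norm y \<Longrightarrow> 1 - y \<bullet> y \<le> 0"
proof -
  assume "1 \<le> norm y"
  then have "1 \<le> norm y ^ 2" by (simp add: one_le_power)
  then show ?thesis by (simp add: dot_square_norm)
qed

lemma FF_zero: "1 \<le> norm y \<Longrightarrow> FF G y = 0"
  using out_ball[of y] by (simp add: FF_def psi_def max_def)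

lemma DFF_zero: "1 \<le> norm y \<Longrightarrow> DFF i G y = 0"
  using out_ball[of y] by (simp add: DFF_def psi_def max_def)

lemma transl:
  fixes F :: "real^'n \<Rightarrow> real"
  assumes F: "(F has_integral I) (cbox a b)" and z: "\<And>x. x \<notin> cbox a b \<Longrightarrow> F x = 0"
  shows "((\<lambda>x. F (x + c)) has_integral I) UNIV"
proof -
  have "((\<lambda>x. F (1 *\<^sub>R x + c)) has_integral (1 / (\<bar>1\<bar> ^ DIM(real^'n))) *\<^sub>R I)
      ((\<lambda>x. (1 / 1) *\<^sub>R x + - ((1 / 1) *\<^sub>R c)) ` cbox a b)"
    by (rule has_integral_affinity[OF F]) simp
  then have h: "((\<lambda>x. F (x + c)) has_integral I) ((\<lambda>x. x - c) ` cbox a b)" by simp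
  show ?thesis
  proof (rule has_integral_on_superset[OF h])
    fix x assume "x \<notin> (\<lambda>x. x - c) ` cbox a b"
    then have "x + c \<notin> cbox a b" by (metis add_diff_cancel image_eqI)
    then show "F (x + c) = 0" by (rule z)
  qed auto
qed

lemma int_DFF_zero:
  fixes G :: "real^'n \<Rightarrow> real"
  assumes G: "hpoly d G"
  shows "integral UNIV (DFF i G) = 0"
proof -
  define K1 where "K1 = cbox (- vec 1) (vec 1 :: real^'n)"
  define K2 where "K2 = cbox (- vec 2) (vec 2 :: real^'n)"
  have out: "1 \<le> norm x" if "x \<notin> K1" for x
    using that ball_sub_cbox[of 1] unfolding K1_def by (auto simp: not_less)
  have "FF G integrable_on K1" unfolding K1_def
    by (rule integrable_continuous, rule continuous_on_subset[OF FF_cont[OF G]]) auto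
  then have hF: "(FF G has_integral integral K1 (FF G)) K1" by (rule integrable_integral)
  define I1 where "I1 = integral K1 (FF G)"
  have hF': "(FF G has_integral I1) (cbox (- vec 1) (vec 1))" using hF unfolding I1_def K1_def .
  have tr: "((\<lambda>x. FF G (x + c)) has_integral I1) UNIV" for c
    by (rule transl[OF hF']) (use out FF_zero in \<open>auto simp: K1_def\<close>)
  have tr0: "(FF G has_integral I1) UNIV" using tr[of 0] by simp
  define h where "h m = inverse (real (Suc m))" for m
  have h0: "0 < h m" and h1: "h m \<le> 1" for m by (auto simp: h_def field_simps)
  define q where "q m x = (FF G (x + h m *\<^sub>R axis i 1) - FF G x) / h m" for m x
  have qint: "(q m has_integral 0) UNIV" for m
  proof -
    have "((\<lambda>x. inverse (h m) *\<^sub>R (FF G (x + h m *\<^sub>R axis i 1) - FF G x)) has_integral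
        inverse (h m) *\<^sub>R (I1 - I1)) UNIV"
      by (intro has_integral_cmul has_integral_diff tr tr0)
    then show ?thesis unfolding q_def by (simp add: divide_inverse mult.commute)
  qed
  have "compact (DFF i G ` cball 0 1)"
    by (intro compact_continuous_image continuous_on_subset[OF DFF_cont[OF G]]) auto
  then obtain M where M: "\<And>y. y \<in> cball 0 1 \<Longrightarrow> norm (DFF i G y) \<le> M"
    using compact_imp_bounded bounded_iff by (metis image_eqI)
  have Mall: "norm (DFF i G y) \<le> M" for y
  proof (cases "norm y \<le> 1")
    case True then show ?thesis using M by auto
  next
    case False
    then have "DFF i G y = 0" by (intro DFF_zero) auto
    moreover have "norm (DFF i G 0) \<le> M" using M by auto
    ultimately show ?thesis by simp
  qed
  have qbound: "norm (q m x) \<le> (if x \<in> K2 then M else 0)" for m x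
  proof (cases "x \<in> K2")
    case True
    define f where "f t = FF G (x + t *\<^sub>R axis i 1)" for t
    have "\<exists>z. 0 < z \<and> z < h m \<and> f (h m) - f 0 = (h m - 0) * DFF i G (x + z *\<^sub>R axis i 1)"
      unfolding f_def by (rule MVT2[OF h0]) (rule FF_deriv[OF G])
    then obtain z where "f (h m) - f 0 = h m * DFF i G (x + z *\<^sub>R axis i 1)" by auto
    then have "q m x = DFF i G (x + z *\<^sub>R axis i 1)" using h0[of m] by (simp add: q_def f_def)
    then show ?thesis using True Mall by simp
  next
    case False
    then obtain j where "\<not> (-2 \<le> x$j \<and> x$j \<le> 2)" unfolding K2_def mem_box_cart by auto
    then have "2 < \<bar>x$j\<bar>" by auto
    then have nx: "2 < norm x" using component_le_norm_cart[of x j] by linarith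
    have "norm x \<le> norm (x + h m *\<^sub>R axis i 1) + norm (h m *\<^sub>R (axis i 1 :: real^'n))"
      using norm_triangle_ineq4[of "x + h m *\<^sub>R axis i 1" "h m *\<^sub>R axis i 1"] by (simp add: norm_axis_1)
    moreover have "norm (h m *\<^sub>R (axis i 1 :: real^'n)) \<le> 1" using h0[of m] h1[of m] by (simp add: norm_axis_1)
    ultimately have "1 \<le> norm (x + h m *\<^sub>R axis i 1)" using nx by linarith
    then show ?thesis using False nx by (simp add: q_def FF_zero)
  qed
  have qconv: "(\<lambda>m. q m x) \<longlonglongrightarrow> DFF i G x" for x
  proof -
    define f where "f t = FF G (x + t *\<^sub>R axis i 1)" for t
    have "(f has_real_derivative DFF i G x) (at 0)"
      using FF_deriv[OF G, of x i 0] unfolding f_def[abs_def] by simp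
    then have L: "(\<lambda>k. (f (0 + k) - f 0) / k) \<midarrow>0\<rightarrow> DFF i G x" by (rule DERIV_D)
    have hl: "h \<longlonglongrightarrow> 0" unfolding h_def by (rule LIMSEQ_inverse_real_of_nat)
    have "(\<lambda>m. (f (0 + h m) - f 0) / h m) \<longlonglongrightarrow> DFF i G x"
    proof -
      have hne: "h m \<noteq> 0" for m using h0[of m] by simp
      show ?thesis using LIMSEQ_SEQ_conv[THEN iffD2, OF L, rule_format, of h] hl hne by simp
    qed
    then show ?thesis by (simp add: q_def f_def)
  qed
  have Kint: "(\<lambda>x. if x \<in> K2 then M else 0) integrable_on UNIV"
    using integrable_restrict_UNIV[of K2 "\<lambda>_. M"] integrable_continuous[of "- vec 2" "vec 2" "\<lambda>_. M"]
    by (simp add: K2_def)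
  have qi: "q m integrable_on UNIV" for m using qint[of m] by (rule has_integral_integrable)
  have dc: "(\<lambda>m. integral UNIV (q m)) \<longlonglongrightarrow> integral UNIV (DFF i G)"
  proof (rule dominated_convergence(2)[of q UNIV "\<lambda>x. if x \<in> K2 then M else 0" "DFF i G"])
    show "q m integrable_on UNIV" for m by (rule qi)
    show "(\<lambda>x. if x \<in> K2 then M else 0) integrable_on UNIV" by (rule Kint)
    show "norm (q m x) \<le> (if x \<in> K2 then M else 0)" for m x by (rule qbound)
    show "(\<lambda>m. q m x) \<longlonglongrightarrow> DFF i G x" for x by (rule qconv)
  qed
  moreover have "(\<lambda>m. integral UNIV (q m)) \<longlonglongrightarrow> 0"
  proof -
    have "integral UNIV (q m) = 0" for m using qint[of m] by (rule integral_unique)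
    then show ?thesis by simp
  qed
  ultimately show ?thesis by (rule LIMSEQ_unique)
qed


lemma integral_cmult_real: "integral S (\<lambda>x. c * f x) = c * integral S (f :: 'a::euclidean_space \<Rightarrow> real)"
  using integral_cmul[where c=c and f=f and S=S] by simp

lemma int_comb5:
  fixes f1 f2 f3 f4 f5 :: "real^'n \<Rightarrow> real"
  assumes "continuous_on UNIV f1" "continuous_on UNIV f2" "continuous_on UNIV f3"
    "continuous_on UNIV f4" "continuous_on UNIV f5"
  shows "integral (ball 0 1) (\<lambda>x. f1 x - 2 * f2 x + f3 x - 4 * f4 x + 4 * f5 x) =
    integral (ball 0 1) f1 - 2 * integral (ball 0 1) f2 + integral (ball 0 1) f3
    - 4 * integral (ball 0 1) f4 + 4 * integral (ball 0 1) f5"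
proof -
  have i: "f integrable_on ball 0 1" if "continuous_on UNIV f" for f :: "real^'n \<Rightarrow> real"
    using that by (rule cont_int_ball)
  have c: "(\<lambda>x. c * f x) integrable_on ball 0 1" if "continuous_on UNIV f" for f :: "real^'n \<Rightarrow> real" and c
    by (rule i) (intro continuous_intros that)
  show ?thesis
    using assms
    by (simp add: integral_add integral_diff integrable_add integrable_diff i c integral_cmult_real)
qed

lemma Rec:
  fixes G :: "real^'n \<Rightarrow> real"
  assumes G: "hpoly d G"
  shows "Av (pd i G) = (real CARD('n) + real d - 1) * Av (\<lambda>y. y$i * G y)"
proof -
  define n where "n = real CARD('n)"
  have n0: "n > 0" unfolding n_def by simp
  define P where "P = pd i G"
  define Q where "Q = (\<lambda>y::real^'n. y$i * G y)"
  have hP: "hpoly (d - 1) P" unfolding P_def by (rule hpoly_pd[OF G])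
  have hQ: "hpoly (1 + d) Q" unfolding Q_def by (rule hpoly_mult[OF hpoly_coord G])
  have cP: "continuous_on UNIV P" by (rule hpoly_cont[OF hP])
  have cQ: "continuous_on UNIV Q" by (rule hpoly_cont[OF hQ])
  define L where "L j h = integral (ball 0 1) (\<lambda>x::real^'n. (x \<bullet> x) ^ j * h x)" for j h
  define IP where "IP = integral (ball 0 1) (\<lambda>x. P (x /\<^sub>R norm x))"
  define IQ where "IQ = integral (ball 0 1) (\<lambda>x. Q (x /\<^sub>R norm x))"
  have iD: "DFF i G integrable_on ball 0 1" by (rule cont_int_ball[OF DFF_cont[OF G]])
  have "(DFF i G has_integral integral (ball 0 1) (DFF i G)) UNIV"
  proof (rule has_integral_on_superset[OF integrable_integral[OF iD]])
    show "DFF i G x = 0" if "x \<notin> ball 0 1" for x using that by (intro DFF_zero) auto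
  qed auto
  then have Z0: "integral (ball 0 1) (DFF i G) = 0"
    using int_DFF_zero[OF G, of i] by (simp add: integral_unique)
  have DFFe: "DFF i G x = (x \<bullet> x) ^ 0 * P x - 2 * ((x \<bullet> x) ^ 1 * P x) + (x \<bullet> x) ^ 2 * P x
      - 4 * ((x \<bullet> x) ^ 0 * Q x) + 4 * ((x \<bullet> x) ^ 1 * Q x)" if "x \<in> ball 0 1" for x
  proof -
    have "norm x < 1" using that by simp
    then have "norm x ^ 2 < 1" by (simp add: power_less_one_iff abs_less_iff)
    then have s: "x \<bullet> x < 1" by (simp add: dot_square_norm)
    have e1: "psi (1 - x \<bullet> x) = (1 - x \<bullet> x)^2" using s by (auto simp: psi_def)
    have e2: "max 0 (1 - x \<bullet> x) = 1 - x \<bullet> x" using s by auto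
    show ?thesis unfolding DFF_def P_def Q_def e1 e2 by (simp add: power2_eq_square algebra_simps)
  qed
  have "integral (ball 0 1) (DFF i G) = integral (ball 0 1) (\<lambda>x. (x \<bullet> x) ^ 0 * P x - 2 * ((x \<bullet> x) ^ 1 * P x) + (x \<bullet> x) ^ 2 * P x
      - 4 * ((x \<bullet> x) ^ 0 * Q x) + 4 * ((x \<bullet> x) ^ 1 * Q x))"
    by (rule integral_cong) (rule DFFe)
  also have "\<dots> = L 0 P - 2 * L 1 P + L 2 P - 4 * L 0 Q + 4 * L 1 Q"
    unfolding L_def by (rule int_comb5) (intro continuous_intros cP cQ)+
  finally have Z: "L 0 P - 2 * L 1 P + L 2 P - 4 * L 0 Q + 4 * L 1 Q = 0" using Z0 by simp
  have RQ: "real (CARD('n) + 2 * j + (1 + d)) * L j Q = n * IQ" for j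
    unfolding L_def IQ_def n_def by (rule radial_hpoly[OF hQ])
  have RP: "real (CARD('n) + 2 * j + (d - 1)) * L j P = n * IP" for j
    unfolding L_def IP_def n_def by (rule radial_hpoly[OF hP])
  have main: "IP = (n + real d - 1) * IQ"
  proof (cases d)
    case 0
    have "P = (\<lambda>x. 0)" unfolding P_def using G 0 by (simp add: hpoly0_pd)
    then have P0: "L j P = 0" "IP = 0" for j by (simp_all add: L_def IP_def)
    have q0: "(n + 1) * L 0 Q = n * IQ" "(n + 3) * L 1 Q = n * IQ"
      using RQ[of 0] RQ[of 1] 0 by (simp_all add: n_def algebra_simps)
    have "L 0 Q = L 1 Q" using Z P0 by simp
    then have "(n + 1) * L 0 Q = (n + 3) * L 0 Q" using q0 by simp
    then have "L 0 Q = 0" by (simp add: algebra_simps)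
    then have "IQ = 0" using q0 n0 by simp
    then show ?thesis using P0 by simp
  next
    case (Suc d')
    define u where "u = n + real d + 1"
    have hu: "u - 2 > 0" using n0 Suc by (simp add: u_def)
    have e0: "(u - 2) * L 0 P = n * IP" using RP[of 0] Suc by (simp add: u_def n_def algebra_simps)
    have e1: "u * L 1 P = n * IP" using RP[of 1] Suc by (simp add: u_def n_def algebra_simps)
    have e2: "(u + 2) * L 2 P = n * IP" using RP[of 2] Suc by (simp add: u_def n_def algebra_simps)
    have f0: "u * L 0 Q = n * IQ" using RQ[of 0] by (simp add: u_def n_def algebra_simps)
    have f1: "(u + 2) * L 1 Q = n * IQ" using RQ[of 1] by (simp add: u_def n_def algebra_simps)
    have "(u - 2) * u * (u + 2) * (L 0 P - 2 * L 1 P + L 2 P - 4 * L 0 Q + 4 * L 1 Q)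
        = u * (u + 2) * ((u - 2) * L 0 P) - 2 * (u - 2) * (u + 2) * (u * L 1 P) + (u - 2) * u * ((u + 2) * L 2 P)
          - 4 * (u - 2) * (u + 2) * (u * L 0 Q) + 4 * (u - 2) * u * ((u + 2) * L 1 Q)"
      by (simp add: algebra_simps)
    also have "\<dots> = 8 * n * (IP - (u - 2) * IQ)"
      unfolding e0 e1 e2 f0 f1 by (simp add: algebra_simps)
    finally have "8 * n * (IP - (u - 2) * IQ) = 0" using Z by simp
    then show ?thesis using n0 by (simp add: u_def)
  qed
  show ?thesis
    unfolding Av_def using main by (simp add: P_def Q_def IP_def IQ_def n_def)
qed


lemma HD: "hpoly k f \<Longrightarrow> ((\<lambda>t. f (x + t *\<^sub>R axis i 1)) has_real_derivative pd i f x) (at 0)"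
  using hpoly_deriv[of k f x i 0] by simp

lemma pd_eqI: "((\<lambda>t. f (x + t *\<^sub>R axis i 1)) has_real_derivative D) (at 0) \<Longrightarrow> pd i f x = D"
  unfolding pd_def by (rule DERIV_imp_deriv)

lemma pd_add: "hpoly a f \<Longrightarrow> hpoly b g \<Longrightarrow> pd i (\<lambda>x. f x + g x) x = pd i f x + pd i g x"
  by (rule pd_eqI, rule DERIV_add) (auto intro: HD)
lemma pd_diff: "hpoly a f \<Longrightarrow> hpoly b g \<Longrightarrow> pd i (\<lambda>x. f x - g x) x = pd i f x - pd i g x"
  by (rule pd_eqI, rule DERIV_diff) (auto intro: HD)
lemma pd_mult: "hpoly a f \<Longrightarrow> hpoly b g \<Longrightarrow> pd i (\<lambda>x. f x * g x) x = pd i f x * g x + f x * pd i g x"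
proof -
  assume f: "hpoly a f" and g: "hpoly b g"
  have "((\<lambda>t. f (x + t *\<^sub>R axis i 1) * g (x + t *\<^sub>R axis i 1)) has_real_derivative
      pd i f x * g (x + 0 *\<^sub>R axis i 1) + pd i g x * f (x + 0 *\<^sub>R axis i 1)) (at 0)"
    by (rule DERIV_mult[OF HD[OF f] HD[OF g]])
  then show ?thesis by (intro pd_eqI) (simp add: algebra_simps)
qed
lemma pd_cmul: "hpoly a f \<Longrightarrow> pd i (\<lambda>x. c * f x) x = c * pd i f x"
  by (rule pd_eqI, rule DERIV_cmult) (auto intro: HD)
lemma pd_sum: "finite S \<Longrightarrow> (\<And>j. j \<in> S \<Longrightarrow> hpoly a (f j)) \<Longrightarrow>
    pd i (\<lambda>x. \<Sum>j\<in>S. f j x) x = (\<Sum>j\<in>S. pd i (f j) x)"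
  by (rule pd_eqI, rule DERIV_sum) (auto intro: HD)
lemma pd_coord: "pd i (\<lambda>x. x$j) x = (if i = j then 1 else 0)"
  by (rule pd_eqI) (auto simp: axis_def intro!: derivative_eq_intros)
lemma pd_const: "pd i (\<lambda>x. c) x = 0"
  by (rule pd_eqI) simp
lemma pd_fun_cong: "(\<And>x. f x = g x) \<Longrightarrow> pd i f x = pd i g x"
  by (metis ext)

lemma hpoly_xx: "hpoly 2 (\<lambda>x::real^'n. x \<bullet> x)"
proof -
  have "hpoly (1 + 1) (\<lambda>x::real^'n. \<Sum>i\<in>UNIV. x$i * x$i)"
    by (intro hpoly_sum hpoly_mult hpoly_coord) auto
  then show ?thesis by (simp add: inner_vec_def numeral_2_eq_2)
qed
lemma hpoly_sqc: "hpoly 2 (\<lambda>x::real^'n. x$j * x$j)"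
  using hpoly_mult[OF hpoly_coord hpoly_coord, of j j] by (simp add: numeral_2_eq_2)
lemma pd_xx: "pd i (\<lambda>x::real^'n. x \<bullet> x) x = 2 * x$i"
proof -
  have "pd i (\<lambda>x::real^'n. x \<bullet> x) x = pd i (\<lambda>x. \<Sum>j\<in>UNIV. x$j * x$j) x"
    by (simp add: inner_vec_def)
  also have "\<dots> = (\<Sum>j\<in>UNIV. pd i (\<lambda>x. x$j * x$j) x)"
    by (rule pd_sum[where a = 2]) (auto intro: hpoly_sqc)
  also have "\<dots> = (\<Sum>j\<in>UNIV. (if i = j then 2 * x$j else 0))"
    by (rule sum.cong) (auto simp: pd_mult[OF hpoly_coord hpoly_coord] pd_coord)
  also have "\<dots> = 2 * x$i" by (simp add: sum.delta)
  finally show ?thesis .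
qed

lemma lap_def': "laplacian f x = (\<Sum>i\<in>UNIV. pd i (pd i f) x)" by (simp add: laplacian_def)

lemma pd_mult_fun: "hpoly a f \<Longrightarrow> hpoly b g \<Longrightarrow> pd i (\<lambda>x. f x * g x) = (\<lambda>x. pd i f x * g x + f x * pd i g x)"
  by (rule ext) (rule pd_mult)

lemma lap_mult:
  assumes f: "hpoly a f" and g: "hpoly b g"
  shows "laplacian (\<lambda>x. f x * g x) x = laplacian f x * g x + 2 * (\<Sum>i\<in>UNIV. pd i f x * pd i g x) + f x * laplacian g x"
proof -
  have "pd i (pd i (\<lambda>x. f x * g x)) x = pd i (pd i f) x * g x + 2 * (pd i f x * pd i g x) + f x * pd i (pd i g) x" for i
  proof -
    have h1: "hpoly (a - 1 + b) (\<lambda>x. pd i f x * g x)" by (intro hpoly_mult hpoly_pd f g)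
    have h2: "hpoly (a + (b - 1)) (\<lambda>x. f x * pd i g x)" by (intro hpoly_mult hpoly_pd f g)
    have "pd i (pd i (\<lambda>x. f x * g x)) x = pd i (\<lambda>x. pd i f x * g x + f x * pd i g x) x"
      by (simp add: pd_mult_fun[OF f g])
    also have "\<dots> = pd i (\<lambda>x. pd i f x * g x) x + pd i (\<lambda>x. f x * pd i g x) x"
      by (rule pd_add[OF h1 h2])
    also have "\<dots> = pd i (pd i f) x * g x + pd i f x * pd i g x + (pd i f x * pd i g x + f x * pd i (pd i g) x)"
      by (simp add: pd_mult[OF hpoly_pd[OF f] g] pd_mult[OF f hpoly_pd[OF g]])
    finally show ?thesis by simp
  qed
  then show ?thesis unfolding lap_def' by (simp add: sum.distrib sum_distrib_left sum_distrib_right)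
qed

lemma lap_add: "hpoly a f \<Longrightarrow> hpoly b g \<Longrightarrow> laplacian (\<lambda>x. f x + g x) x = laplacian f x + laplacian g x"
proof -
  assume f: "hpoly a f" and g: "hpoly b g"
  have "pd i (\<lambda>x. f x + g x) = (\<lambda>x. pd i f x + pd i g x)" for i by (rule ext) (rule pd_add[OF f g])
  then show ?thesis unfolding lap_def'
    by (simp add: pd_add[OF hpoly_pd[OF f] hpoly_pd[OF g]] sum.distrib)
qed
lemma lap_diff: "hpoly a f \<Longrightarrow> hpoly b g \<Longrightarrow> laplacian (\<lambda>x. f x - g x) x = laplacian f x - laplacian g x"
proof -
  assume f: "hpoly a f" and g: "hpoly b g"
  have "pd i (\<lambda>x. f x - g x) = (\<lambda>x. pd i f x - pd i g x)" for i by (rule ext) (rule pd_diff[OF f g])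
  then show ?thesis unfolding lap_def'
    by (simp add: pd_diff[OF hpoly_pd[OF f] hpoly_pd[OF g]] sum_subtractf)
qed
lemma lap_cmul: "hpoly a f \<Longrightarrow> laplacian (\<lambda>x. c * f x) x = c * laplacian f x"
proof -
  assume f: "hpoly a f"
  have "pd i (\<lambda>x. c * f x) = (\<lambda>x. c * pd i f x)" for i by (rule ext) (rule pd_cmul[OF f])
  then show ?thesis unfolding lap_def'
    by (simp add: pd_cmul[OF hpoly_pd[OF f]] sum_distrib_left)
qed
lemma lap_coord: "laplacian (\<lambda>x. x$j) x = 0"
proof -
  have "pd i (\<lambda>x. x$j) = (\<lambda>x. if i = j then 1 else 0)" for i by (rule ext) (rule pd_coord)
  then show ?thesis unfolding lap_def' by (simp add: pd_const)
qed
lemma lap_xx: "laplacian (\<lambda>x::real^'n. x \<bullet> x) x = 2 * real CARD('n)"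
proof -
  have "pd i (\<lambda>x::real^'n. x \<bullet> x) = (\<lambda>x. 2 * x$i)" for i by (rule ext) (rule pd_xx)
  then have "pd i (pd i (\<lambda>x::real^'n. x \<bullet> x)) x = 2" for i
    by (simp add: pd_cmul[OF hpoly_coord] pd_coord)
  then show ?thesis unfolding lap_def' by simp
qed
lemma pd_lap_comm: "hpoly k f \<Longrightarrow> pd j (laplacian f) x = laplacian (pd j f) x"
proof -
  assume f: "hpoly k f"
  have "pd j (laplacian f) x = pd j (\<lambda>x. \<Sum>i\<in>UNIV. pd i (pd i f) x) x"
    by (simp add: laplacian_def[abs_def])
  also have "\<dots> = (\<Sum>i\<in>UNIV. pd j (pd i (pd i f)) x)"
    by (rule pd_sum) (auto intro: hpoly_pd f)
  also have "\<dots> = (\<Sum>i\<in>UNIV. pd i (pd i (pd j f)) x)"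
  proof (rule sum.cong)
    fix i
    have "pd j (pd i (pd i f)) = pd i (pd j (pd i f))" by (rule pd_comm[OF hpoly_pd[OF f]])
    also have "pd j (pd i f) = pd i (pd j f)" by (rule pd_comm[OF f])
    finally show "pd j (pd i (pd i f)) x = pd i (pd i (pd j f)) x" by simp
  qed simp
  finally show ?thesis by (simp add: lap_def')
qed


lemma Av_zero_fun: "Av (\<lambda>x. 0) = (0::'b::euclidean_space)" by (simp add: Av_def)

lemma pd_cont: "hpoly k f \<Longrightarrow> continuous_on UNIV (pd i f)"
  by (rule hpoly_cont[OF hpoly_pd])

lemma Av_harm_zero:
  assumes n: "CARD('n) \<ge> 2" and p: "hpoly m (p :: real^'n \<Rightarrow> real)" and m: "m \<ge> 1"
    and h: "\<And>x. laplacian p x = 0"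
  shows "Av p = 0"
proof -
  have R: "Av (pd i (pd i p)) = (real CARD('n) + real (m - 1) - 1) * Av (\<lambda>y. y$i * pd i p y)" for i
    by (rule Rec[OF hpoly_pd[OF p]])
  have "laplacian p = (\<lambda>x. 0)" using h by (simp add: fun_eq_iff)
  then have "0 = Av (laplacian p)" by (simp add: Av_zero_fun)
  also have "Av (laplacian p) = Av (\<lambda>x. \<Sum>i\<in>UNIV. pd i (pd i p) x)" by (simp add: laplacian_def[abs_def])
  also have "\<dots> = (\<Sum>i\<in>UNIV. Av (pd i (pd i p)))"
    by (rule Av_sum) (auto intro: pd_cont hpoly_pd p)
  also have "\<dots> = (real CARD('n) + real (m - 1) - 1) * (\<Sum>i\<in>UNIV. Av (\<lambda>y. y$i * pd i p y))"
    by (simp add: R sum_distrib_left)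
  also have "(\<Sum>i\<in>UNIV. Av (\<lambda>y. y$i * pd i p y)) = Av (\<lambda>y. \<Sum>i\<in>UNIV. y$i * pd i p y)"
    by (rule Av_sum[symmetric]) (auto intro!: continuous_intros pd_cont p)
  also have "\<dots> = Av (\<lambda>y. real m * p y)" by (simp add: euler[OF p])
  also have "\<dots> = real m * Av p" by (rule Av_cmul)
  finally have "0 = (real CARD('n) + real (m - 1) - 1) * (real m * Av p)" .
  moreover have "real CARD('n) + real (m - 1) - 1 > 0" using n m by simp
  ultimately show ?thesis using m by simp
qed

lemma Green:
  fixes a b :: "real^'n \<Rightarrow> real"
  assumes a: "hpoly \<alpha> a" and b: "hpoly \<beta> b" and hb: "\<And>x. laplacian b x = 0"
  shows "Av (\<lambda>x. \<Sum>i\<in>UNIV. pd i a x * pd i b x) = real \<beta> * (real CARD('n) + real \<alpha> + real \<beta> - 2) * Av (\<lambda>x. a x * b x)"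
proof (cases "\<beta> = 0")
  case True
  then have "pd i b = (\<lambda>x. 0)" for i using b hpoly0_pd by blast
  then show ?thesis using True by (simp add: Av_zero_fun)
next
  case False
  define G where "G i x = a x * pd i b x" for i x
  have hG: "hpoly (\<alpha> + (\<beta> - 1)) (G i)" for i unfolding G_def[abs_def] by (intro hpoly_mult a hpoly_pd b)
  have R: "Av (pd i (G i)) = (real CARD('n) + real (\<alpha> + (\<beta> - 1)) - 1) * Av (\<lambda>y. y$i * G i y)" for i
    by (rule Rec[OF hG])
  have pG: "pd i (G i) x = pd i a x * pd i b x + a x * pd i (pd i b) x" for i x
    unfolding G_def by (rule pd_mult[OF a hpoly_pd[OF b]])
  have "(\<Sum>i\<in>UNIV. Av (pd i (G i))) = Av (\<lambda>x. \<Sum>i\<in>UNIV. pd i (G i) x)"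
    by (rule Av_sum[symmetric]) (auto intro: pd_cont hG)
  also have "(\<lambda>x. \<Sum>i\<in>UNIV. pd i (G i) x) = (\<lambda>x. (\<Sum>i\<in>UNIV. pd i a x * pd i b x) + a x * laplacian b x)"
    by (simp add: pG sum.distrib lap_def' sum_distrib_left)
  also have "\<dots> = (\<lambda>x. \<Sum>i\<in>UNIV. pd i a x * pd i b x)" by (simp add: hb)
  finally have L: "(\<Sum>i\<in>UNIV. Av (pd i (G i))) = Av (\<lambda>x. \<Sum>i\<in>UNIV. pd i a x * pd i b x)" .
  have "(\<Sum>i\<in>UNIV. Av (\<lambda>y. y$i * G i y)) = Av (\<lambda>y. \<Sum>i\<in>UNIV. y$i * G i y)"
    by (rule Av_sum[symmetric]) (auto intro!: continuous_intros hpoly_cont[OF hG])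
  also have "(\<lambda>y. \<Sum>i\<in>UNIV. y$i * G i y) = (\<lambda>y. real \<beta> * (a y * b y))"
  proof
    fix y
    have "(\<Sum>i\<in>UNIV. y$i * G i y) = a y * (\<Sum>i\<in>UNIV. y$i * pd i b y)"
      by (simp add: G_def sum_distrib_left algebra_simps)
    also have "\<dots> = real \<beta> * (a y * b y)" by (simp add: euler[OF b])
    finally show "(\<Sum>i\<in>UNIV. y$i * G i y) = real \<beta> * (a y * b y)" .
  qed
  finally have Rt: "(\<Sum>i\<in>UNIV. Av (\<lambda>y. y$i * G i y)) = real \<beta> * Av (\<lambda>y. a y * b y)"
    by (simp add: Av_cmul)
  have "Av (\<lambda>x. \<Sum>i\<in>UNIV. pd i a x * pd i b x) = (real CARD('n) + real (\<alpha> + (\<beta> - 1)) - 1) * (\<Sum>i\<in>UNIV. Av (\<lambda>y. y$i * G i y))"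
    unfolding L[symmetric] by (simp add: R sum_distrib_left)
  then show ?thesis using False Rt by (simp add: of_nat_diff algebra_simps)
qed

lemma gradT_inner_sphere:
  fixes a b :: "real^'n \<Rightarrow> real"
  assumes a: "hpoly \<alpha> a" and b: "hpoly \<beta> b" and x: "norm x = 1"
  shows "gradT a x \<bullet> gradT b x = (\<Sum>i\<in>UNIV. pd i a x * pd i b x) - real \<alpha> * real \<beta> * a x * b x"
proof -
  have xx: "x \<bullet> x = 1" using x by (simp add: dot_square_norm)
  have ga: "grad a x \<bullet> x = real \<alpha> * a x"
    using euler[OF a, of x] by (simp add: grad_def inner_vec_def mult.commute)
  have gb: "grad b x \<bullet> x = real \<beta> * b x"
    using euler[OF b, of x] by (simp add: grad_def inner_vec_def mult.commute)
  have gab: "grad a x \<bullet> grad b x = (\<Sum>i\<in>UNIV. pd i a x * pd i b x)"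
    by (simp add: grad_def inner_vec_def)
  have "gradT a x \<bullet> gradT b x = grad a x \<bullet> grad b x - (grad a x \<bullet> x) * (grad b x \<bullet> x)"
    unfolding gradT_def by (simp add: inner_diff_left inner_diff_right xx inner_commute algebra_simps)
  then show ?thesis by (simp add: ga gb gab)
qed

lemma gradT_cont: "hpoly k f \<Longrightarrow> continuous_on UNIV (gradT f)"
  unfolding gradT_def grad_def
  by (intro continuous_intros) (auto simp: continuous_on_vec_lambda intro: pd_cont)

lemma Av_gradT_harm:
  fixes a b :: "real^'n \<Rightarrow> real"
  assumes a: "hpoly m a" and b: "hpoly m b" and hb: "\<And>x. laplacian b x = 0"
  shows "Av (\<lambda>x. gradT a x \<bullet> gradT b x) = real m * (real m + real CARD('n) - 2) * Av (\<lambda>x. a x * b x)"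
proof -
  have "Av (\<lambda>x. gradT a x \<bullet> gradT b x) = Av (\<lambda>x. (\<Sum>i\<in>UNIV. pd i a x * pd i b x) - (real m * real m) * (a x * b x))"
    by (rule Av_cong) (simp add: gradT_inner_sphere[OF a b] algebra_simps)
  also have "\<dots> = Av (\<lambda>x. \<Sum>i\<in>UNIV. pd i a x * pd i b x) - Av (\<lambda>x. (real m * real m) * (a x * b x))"
    by (rule Av_diff) (auto intro!: continuous_intros pd_cont[OF a] pd_cont[OF b] hpoly_cont[OF a] hpoly_cont[OF b])
  also have "\<dots> = real m * (real m + real CARD('n) - 2) * Av (\<lambda>x. a x * b x)"
    by (simp add: Green[OF a b hb] Av_cmul algebra_simps)
  finally show ?thesis .
qed

lemma harm_orth:
  fixes a b :: "real^'n \<Rightarrow> real"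
  assumes n: "CARD('n) \<ge> 2" and a: "hpoly \<alpha> a" and b: "hpoly \<beta> b"
    and ha: "\<And>x. laplacian a x = 0" and hb: "\<And>x. laplacian b x = 0" and ne: "\<alpha> \<noteq> \<beta>"
  shows "Av (\<lambda>x. a x * b x) = 0"
proof -
  have g1: "Av (\<lambda>x. \<Sum>i\<in>UNIV. pd i a x * pd i b x) = real \<beta> * (real CARD('n) + real \<alpha> + real \<beta> - 2) * Av (\<lambda>x. a x * b x)"
    by (rule Green[OF a b hb])
  have g2: "Av (\<lambda>x. \<Sum>i\<in>UNIV. pd i b x * pd i a x) = real \<alpha> * (real CARD('n) + real \<beta> + real \<alpha> - 2) * Av (\<lambda>x. b x * a x)"
    by (rule Green[OF b a ha])
  have "(\<lambda>x. \<Sum>i\<in>UNIV. pd i b x * pd i a x) = (\<lambda>x. \<Sum>i\<in>UNIV. pd i a x * pd i b x)" by (simp add: mult.commute)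
  moreover have "(\<lambda>x. b x * a x) = (\<lambda>x. a x * b x)" by (simp add: mult.commute)
  ultimately have "(real \<beta> - real \<alpha>) * (real CARD('n) + real \<alpha> + real \<beta> - 2) * Av (\<lambda>x. a x * b x) = 0"
    using g1 g2 by (simp add: algebra_simps)
  moreover have "real CARD('n) + real \<alpha> + real \<beta> - 2 > 0"
  proof -
    have "2 < CARD('n) + \<alpha> + \<beta>" using n ne by arith
    then have "real 2 < real (CARD('n) + \<alpha> + \<beta>)" by (simp only: of_nat_less_iff)
    then show ?thesis by simp
  qed
  ultimately show ?thesis using ne by simp
qed


lemma grad_nth: "grad f x $ j = pd j f x" by (simp add: grad_def)

lemma comp_app: "comp w j x = w x $ j" by (simp add: comp_def)

lemma winner: "w x \<bullet> x = (\<Sum>j\<in>UNIV. x$j * comp w j x)"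
  by (simp add: inner_vec_def comp_def mult.commute)

lemma wwinner: "w x \<bullet> w x = (\<Sum>j\<in>UNIV. comp w j x * comp w j x)"
  by (simp add: inner_vec_def comp_def)

lemma divE_eq: "divE w x = (\<Sum>j\<in>UNIV. pd j (comp w j) x)" by (simp add: divE_def)

lemma grad_x: "hpoly k f \<Longrightarrow> grad f x \<bullet> x = real k * f x"
  using euler[of k f x] by (simp add: grad_def inner_vec_def mult.commute)

lemma divS_eq:
  fixes w :: "real^'n \<Rightarrow> real^'n"
  assumes h: "\<And>j. hpoly k (comp w j)"
  shows "divS w x = divE w x - real k * (w x \<bullet> x)"
proof -
  have "divS w x = (\<Sum>j\<in>UNIV. pd j (comp w j) x - real k * comp w j x * x$j)"
    unfolding divS_def gradT_def by (intro sum.cong refl) (simp add: grad_x[OF h] grad_nth)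
  also have "\<dots> = divE w x - real k * (w x \<bullet> x)"
    by (simp add: divE_eq sum_subtractf winner sum_distrib_left algebra_simps)
  finally show ?thesis .
qed

lemma wAw_eq:
  fixes w :: "real^'n \<Rightarrow> real^'n"
  assumes h: "\<And>j. hpoly k (comp w j)"
  shows "w x \<bullet> Aop w x = divE w x * (w x \<bullet> x) - (\<Sum>i\<in>UNIV. \<Sum>j\<in>UNIV. x$j * comp w i x * pd i (comp w j) x)"
proof -
  have wg: "w x \<bullet> gradT (comp w j) x = (\<Sum>i\<in>UNIV. comp w i x * pd i (comp w j) x) - real k * comp w j x * (w x \<bullet> x)" for j
  proof -
    have "w x \<bullet> gradT (comp w j) x = w x \<bullet> grad (comp w j) x - (grad (comp w j) x \<bullet> x) * (w x \<bullet> x)"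
      unfolding gradT_def by (simp add: inner_diff_right)
    also have "\<dots> = w x \<bullet> grad (comp w j) x - real k * comp w j x * (w x \<bullet> x)"
      by (simp only: grad_x[OF h])
    also have "w x \<bullet> grad (comp w j) x = (\<Sum>i\<in>UNIV. comp w i x * pd i (comp w j) x)"
      by (simp add: inner_vec_def grad_nth comp_def)
    finally show ?thesis .
  qed
  have "w x \<bullet> Aop w x = divS w x * (w x \<bullet> x) - (\<Sum>j\<in>UNIV. x$j * (w x \<bullet> gradT (comp w j) x))"
    unfolding Aop_def by (simp add: inner_diff_right inner_sum_right)
  also have "\<dots> = divS w x * (w x \<bullet> x) - (\<Sum>j\<in>UNIV. x$j * (\<Sum>i\<in>UNIV. comp w i x * pd i (comp w j) x))
       + real k * (w x \<bullet> x) * (\<Sum>j\<in>UNIV. x$j * comp w j x)"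
    by (simp add: wg right_diff_distrib sum_subtractf sum_distrib_left algebra_simps)
  also have "\<dots> = divE w x * (w x \<bullet> x) - (\<Sum>j\<in>UNIV. x$j * (\<Sum>i\<in>UNIV. comp w i x * pd i (comp w j) x))"
    by (simp add: divS_eq[OF h] winner[symmetric] algebra_simps)
  also have "(\<Sum>j\<in>UNIV. x$j * (\<Sum>i\<in>UNIV. comp w i x * pd i (comp w j) x)) =
      (\<Sum>i\<in>UNIV. \<Sum>j\<in>UNIV. x$j * comp w i x * pd i (comp w j) x)"
  proof -
    have "(\<Sum>j\<in>UNIV. x$j * (\<Sum>i\<in>UNIV. comp w i x * pd i (comp w j) x)) =
      (\<Sum>j\<in>UNIV. \<Sum>i\<in>UNIV. x$j * comp w i x * pd i (comp w j) x)"
      by (simp add: sum_distrib_left mult.assoc)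
    also have "\<dots> = (\<Sum>i\<in>UNIV. \<Sum>j\<in>UNIV. x$j * comp w i x * pd i (comp w j) x)"
      by (rule sum.swap)
    finally show ?thesis .
  qed
  finally show ?thesis .
qed

lemma Aop_x_sphere:
  assumes "norm x = 1"
  shows "Aop w x \<bullet> x = divS w x"
proof -
  have xx: "x \<bullet> x = 1" using assms by (simp add: dot_square_norm)
  have "gradT f x \<bullet> x = 0" for f unfolding gradT_def by (simp add: inner_diff_left xx)
  then show ?thesis unfolding Aop_def by (simp add: inner_diff_left inner_sum_left xx)
qed

lemma hpoly_zero_ball:
  assumes f: "hpoly m f" and z: "\<And>x. x \<in> ball 0 1 \<Longrightarrow> f x = 0"
  shows "f x = 0"
proof -
  define r where "r = 1 / (norm x + 1)"
  have pos: "0 < norm x + 1" by (metis norm_ge_zero add_nonneg_pos zero_less_one)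
  have r: "r > 0" using pos by (simp add: r_def)
  have "norm (r *\<^sub>R x) < 1" using r pos by (simp add: r_def norm_scaleR field_simps)
  then have "f (r *\<^sub>R x) = 0" by (intro z) simp
  then have "r ^ m * f x = 0" by (simp add: hpoly_homog[OF f])
  then show ?thesis using r by simp
qed

lemma hpoly_divE: "(\<And>j. hpoly k (comp w j)) \<Longrightarrow> hpoly (k - 1) (divE w)"
  unfolding divE_def[abs_def] by (intro hpoly_sum hpoly_pd) auto

lemma hpoly_winner: "(\<And>j. hpoly k (comp w j)) \<Longrightarrow> hpoly (1 + k) (\<lambda>x. w x \<bullet> x)"
  unfolding winner by (intro hpoly_sum hpoly_mult hpoly_coord) auto

lemma cont_comp: "(\<And>j. hpoly k (comp w j)) \<Longrightarrow> continuous_on UNIV w"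
proof -
  assume h: "\<And>j. hpoly k (comp w j)"
  have "continuous_on UNIV (\<lambda>x. w x $ j)" for j using hpoly_cont[OF h[of j]] by (simp add: comp_def[abs_def])
  then have "continuous_on UNIV (\<lambda>x. \<chi> j. w x $ j)" by (rule continuous_on_vec_lambda)
  then show ?thesis by simp
qed

lemma G1:
  fixes w :: "real^'n \<Rightarrow> real^'n"
  assumes h: "\<And>j. hpoly k (comp w j)"
  shows "Av (\<lambda>x. w x \<bullet> Aop w x) = Av (\<lambda>x. w x \<bullet> w x) + 2 * Av (\<lambda>x. divE w x * (w x \<bullet> x))
     - (real CARD('n) + 2 * real k) * Av (\<lambda>x. (w x \<bullet> x)^2)"
proof -
  define p where "p = comp w"
  have hp: "hpoly k (p j)" for j unfolding p_def by (rule h)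
  define f where "f x = (\<Sum>j\<in>UNIV. x$j * p j x)" for x
  have hf: "hpoly (1 + k) f" unfolding f_def[abs_def] by (intro hpoly_sum hpoly_mult hpoly_coord hp) auto
  have fw: "w x \<bullet> x = f x" for x by (simp add: f_def winner p_def)
  define E where "E = divE w"
  have hE: "hpoly (k - 1) E" unfolding E_def by (rule hpoly_divE[OF h])
  have Ee: "E x = (\<Sum>j\<in>UNIV. pd j (p j) x)" for x by (simp add: E_def p_def divE_def)
  define S where "S x = (\<Sum>i\<in>UNIV. \<Sum>j\<in>UNIV. x$j * p i x * pd i (p j) x)" for x
  define W where "W x = (\<Sum>i\<in>UNIV. p i x * p i x)" for x
  have Ww: "w x \<bullet> w x = W x" for x by (simp add: W_def wwinner p_def)
  have cE: "continuous_on UNIV E" by (rule hpoly_cont[OF hE])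
  have cf: "continuous_on UNIV f" by (rule hpoly_cont[OF hf])
  have cS: "continuous_on UNIV S" unfolding S_def[abs_def]
    by (intro continuous_intros pd_cont[OF hp] hpoly_cont[OF hp])
  have cW: "continuous_on UNIV W" unfolding W_def[abs_def]
    by (intro continuous_intros hpoly_cont[OF hp])
  have cEf: "continuous_on UNIV (\<lambda>x. E x * f x)" by (intro continuous_intros cE cf)
  have a: "w x \<bullet> Aop w x = E x * f x - S x" for x
    using wAw_eq[OF h, of x] by (simp add: E_def fw S_def p_def)
  define Gi where "Gi i x = p i x * f x" for i x
  have hG: "hpoly (k + (1 + k)) (Gi i)" for i unfolding Gi_def[abs_def] by (intro hpoly_mult hp hf)
  have pdf: "pd i f x = p i x + (\<Sum>j\<in>UNIV. x$j * pd i (p j) x)" for i x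
  proof -
    have "pd i f x = (\<Sum>j\<in>UNIV. pd i (\<lambda>x. x$j * p j x) x)"
      unfolding f_def[abs_def] by (rule pd_sum) (auto intro: hpoly_mult hpoly_coord hp)
    also have "\<dots> = (\<Sum>j\<in>UNIV. (if i = j then p j x else 0) + x$j * pd i (p j) x)"
      by (intro sum.cong refl) (simp add: pd_mult[OF hpoly_coord hp] pd_coord)
    finally show ?thesis by (simp add: sum.distrib)
  qed
  have b: "(\<Sum>i\<in>UNIV. pd i (Gi i) x) = E x * f x + W x + S x" for x
  proof -
    have "pd i (Gi i) x = pd i (p i) x * f x + p i x * p i x + (\<Sum>j\<in>UNIV. x$j * p i x * pd i (p j) x)" for i
      unfolding Gi_def pd_mult[OF hp hf] pdf by (simp add: algebra_simps sum_distrib_left)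
    then show ?thesis by (simp add: sum.distrib Ee W_def S_def sum_distrib_right)
  qed
  have c0: "Av (pd i (Gi i)) = (real CARD('n) + 2 * real k) * Av (\<lambda>y. y$i * Gi i y)" for i
    using Rec[OF hG, of i] by (simp add: algebra_simps)
  have "Av (\<lambda>x. \<Sum>i\<in>UNIV. pd i (Gi i) x) = (\<Sum>i\<in>UNIV. Av (pd i (Gi i)))"
    by (rule Av_sum) (auto intro: pd_cont hG)
  also have "\<dots> = (real CARD('n) + 2 * real k) * (\<Sum>i\<in>UNIV. Av (\<lambda>y. y$i * Gi i y))"
    by (simp add: c0 sum_distrib_left)
  also have "(\<Sum>i\<in>UNIV. Av (\<lambda>y. y$i * Gi i y)) = Av (\<lambda>y. \<Sum>i\<in>UNIV. y$i * Gi i y)"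
    by (rule Av_sum[symmetric]) (auto intro!: continuous_intros hpoly_cont[OF hG])
  also have "(\<lambda>y. \<Sum>i\<in>UNIV. y$i * Gi i y) = (\<lambda>y. (f y)^2)"
  proof
    fix y
    have "(\<Sum>i\<in>UNIV. y$i * Gi i y) = (\<Sum>i\<in>UNIV. y$i * p i y) * f y"
      unfolding Gi_def by (simp add: sum_distrib_right mult.assoc)
    then show "(\<Sum>i\<in>UNIV. y$i * Gi i y) = (f y)^2" by (simp add: f_def power2_eq_square)
  qed
  finally have c: "Av (\<lambda>x. E x * f x + W x + S x) = (real CARD('n) + 2 * real k) * Av (\<lambda>y. (f y)^2)"
    by (simp add: b)
  have l1: "Av (\<lambda>x. E x * f x + W x + S x) = Av (\<lambda>x. E x * f x) + Av W + Av S"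
    by (simp only: Av_add[OF continuous_on_add[OF cEf cW] cS] Av_add[OF cEf cW])
  have l2: "Av (\<lambda>x. w x \<bullet> Aop w x) = Av (\<lambda>x. E x * f x) - Av S"
    unfolding a by (rule Av_diff[OF cEf cS])
  show ?thesis unfolding Ww fw using l1 l2 c by (simp add: E_def[symmetric] algebra_simps)
qed

lemma Av_gradT_sq:
  fixes w :: "real^'n \<Rightarrow> real^'n"
  assumes h: "\<And>j. hpoly k (comp w j)" and hl: "\<And>j x. laplacian (comp w j) x = 0"
  shows "Av (gradT_sq w) = real k * (real k + real CARD('n) - 2) * Av (\<lambda>x. w x \<bullet> w x)"
proof -
  have "Av (gradT_sq w) = Av (\<lambda>x. \<Sum>j\<in>UNIV. gradT (comp w j) x \<bullet> gradT (comp w j) x)"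
    by (simp add: gradT_sq_def[abs_def] power2_norm_eq_inner)
  also have "\<dots> = (\<Sum>j\<in>UNIV. Av (\<lambda>x. gradT (comp w j) x \<bullet> gradT (comp w j) x))"
    by (rule Av_sum) (auto intro!: continuous_intros gradT_cont[OF h])
  also have "\<dots> = (\<Sum>j\<in>UNIV. real k * (real k + real CARD('n) - 2) * Av (\<lambda>x. comp w j x * comp w j x))"
    by (simp add: Av_gradT_harm[OF h h hl])
  also have "\<dots> = real k * (real k + real CARD('n) - 2) * (\<Sum>j\<in>UNIV. Av (\<lambda>x. comp w j x * comp w j x))"
    by (simp add: sum_distrib_left)
  also have "(\<Sum>j\<in>UNIV. Av (\<lambda>x. comp w j x * comp w j x)) = Av (\<lambda>x. w x \<bullet> w x)"
    unfolding wwinner by (rule Av_sum[symmetric]) (auto intro!: continuous_intros hpoly_cont[OF h])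
  finally show ?thesis .
qed


lemma alg0: "(y::real) \<noteq> 0 \<Longrightarrow> x / (2 * y) * (u + z / y * (a * u)) - c * u = (x / (2 * y) + x * z / (2 * y\<^sup>2) * a - c) * u"
  by (simp add: field_simps power2_eq_square)
lemma alg1: "(L::real) \<noteq> 0 \<Longrightarrow> n / 2 * (- k * W) = n * (- k) / (2 * L) * (L * W)"
  by (simp add: field_simps)
lemma aux1b: "(L::real) \<noteq> 0 \<Longrightarrow> n \<noteq> 0 \<Longrightarrow> D \<noteq> 0 \<Longrightarrow> k^2 * ((k + 1) * W / D) = k^2 * (- n * k - n) / (n * L * (- D)) * (L * W)"
  by (simp add: field_simps)
lemma alg1b: "(L::real) \<noteq> 0 \<Longrightarrow> n \<noteq> 0 \<Longrightarrow> n + 2 * k \<noteq> 0 \<Longrightarrow>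
  k^2 * ((k + 1) * W / (n + 2 * k)) = (- k)^2 * (2 * L * (n * (- k) / (2 * L)) - n) / (n * L * (2 * (- k) - n)) * (L * W)"
proof -
  assume L: "L \<noteq> 0" and n: "n \<noteq> 0" and m: "n + 2 * k \<noteq> 0"
  have e: "2 * L * (n * (- k) / (2 * L)) = - n * k" using L by simp
  have m2: "2 * (- k) - n = - (n + 2 * k)" by simp
  show ?thesis unfolding e m2 using aux1b[OF L n m] by simp
qed
lemma alg2: "(L::real) \<noteq> 0 \<Longrightarrow> n / 2 * W = n * 1 / (2 * L) * (L * W)"
  by (simp add: field_simps)

lemma Hnk_unpack:
  assumes "Hnk k w"
  shows "Hn w" "\<And>j. hpoly k (comp w j)" "\<And>j x. laplacian (comp w j) x = 0"
  using assms by (auto simp: Hnk_def sph_harm_def hom_poly_iff)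

lemma cont_divS:
  fixes w :: "real^'n \<Rightarrow> real^'n"
  assumes h: "\<And>j. hpoly k (comp w j)"
  shows "continuous_on UNIV (divS w)"
proof -
  have "divS w = (\<lambda>x. divE w x - real k * (w x \<bullet> x))" by (rule ext) (rule divS_eq[OF h])
  moreover have "continuous_on UNIV (\<lambda>x. divE w x - real k * (w x \<bullet> x))"
    by (intro continuous_intros hpoly_cont[OF hpoly_divE[OF h]] hpoly_cont[OF hpoly_winner[OF h]])
  ultimately show ?thesis by simp
qed

lemma cont_gradT_sq:
  fixes w :: "real^'n \<Rightarrow> real^'n"
  assumes h: "\<And>j. hpoly k (comp w j)"
  shows "continuous_on UNIV (gradT_sq w)"
  unfolding gradT_sq_def[abs_def] by (intro continuous_intros gradT_cont[OF h])

lemma assemble: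
  fixes w :: "real^'n \<Rightarrow> real^'n"
  assumes n3: "CARD('n) \<ge> 3" and h: "\<And>j. hpoly k (comp w j)"
    and qv: "QV w = c * Av (gradT_sq w)" and dv: "Av (\<lambda>x. (divS w x)\<^sup>2) = a * Av (gradT_sq w)"
  shows "Qn w = (real CARD('n) / (2 * (real CARD('n) - 1)) + real CARD('n) * (real CARD('n) - 3) / (2 * (real CARD('n) - 1)\<^sup>2) * a - c) * Av (gradT_sq w)"
proof -
  define n where "n = real CARD('n)"
  have n1: "n - 1 > 0" using n3 by (simp add: n_def)
  have cd: "continuous_on UNIV (\<lambda>x. (divS w x)\<^sup>2)" by (intro continuous_intros cont_divS[OF h])
  have "Av (\<lambda>x. gradT_sq w x + (n - 3) / (n - 1) * (divS w x)\<^sup>2) = Av (gradT_sq w) + Av (\<lambda>x. (n - 3) / (n - 1) * (divS w x)\<^sup>2)"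
    by (rule Av_add[OF cont_gradT_sq[OF h]]) (intro continuous_intros cd)
  also have "Av (\<lambda>x. (n - 3) / (n - 1) * (divS w x)\<^sup>2) = (n - 3) / (n - 1) * Av (\<lambda>x. (divS w x)\<^sup>2)"
    by (rule Av_cmul)
  finally have av: "Av (\<lambda>x. gradT_sq w x + (n - 3) / (n - 1) * (divS w x)\<^sup>2) = Av (gradT_sq w) + (n - 3) / (n - 1) * Av (\<lambda>x. (divS w x)\<^sup>2)" .
  then have "Qn w = n / (2 * (n - 1)) * (Av (gradT_sq w) + (n - 3) / (n - 1) * (a * Av (gradT_sq w))) - c * Av (gradT_sq w)"
    unfolding Qn_def Let_def n_def[symmetric] using qv dv av by simp
  then show ?thesis unfolding n_def[symmetric] using alg0[of "n - 1" n "Av (gradT_sq w)" "n - 3" a c] n1 by simp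
qed

lemma divE_zero:
  fixes w :: "real^'n \<Rightarrow> real^'n"
  assumes "Hsol k w"
  shows "divE w x = 0"
proof -
  have h: "\<And>j. hpoly k (comp w j)" using assms Hnk_unpack by (auto simp: Hsol_def)
  show ?thesis
    by (rule hpoly_zero_ball[OF hpoly_divE[OF h]]) (use assms in \<open>auto simp: Hsol_def\<close>)
qed

lemma case1:
  fixes w :: "real^'n \<Rightarrow> real^'n"
  assumes n3: "CARD('n) \<ge> 3" and k: "k \<ge> 1" and H: "H1 k w"
  shows "QV w = cc (real CARD('n)) k 1 * Av (gradT_sq w) \<and>
         Av (\<lambda>x. (divS w x)\<^sup>2) = alph (real CARD('n)) k 1 * Av (gradT_sq w)"
proof -
  define n where "n = real CARD('n)"
  have n0: "n \<ge> 3" using n3 by (simp add: n_def)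
  have Hs: "Hsol k w" and A: "\<And>x. x \<in> sphere 0 1 \<Longrightarrow> Aop w x = - real k *\<^sub>R w x" using H by (auto simp: H1_def)
  have Hk: "Hnk k w" using Hs by (simp add: Hsol_def)
  note h = Hnk_unpack(2)[OF Hk] and hl = Hnk_unpack(3)[OF Hk]
  have E0: "divE w x = 0" for x by (rule divE_zero[OF Hs])
  define W where "W = Av (\<lambda>x. w x \<bullet> w x)"
  define F where "F = Av (\<lambda>x. (w x \<bullet> x)\<^sup>2)"
  have wA: "Av (\<lambda>x. w x \<bullet> Aop w x) = - real k * W"
  proof -
    have "Av (\<lambda>x. w x \<bullet> Aop w x) = Av (\<lambda>x. (- real k) * (w x \<bullet> w x))"
      by (rule Av_cong) (simp add: A)
    also have "\<dots> = (- real k) * W" unfolding W_def by (rule Av_cmul)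
    finally show ?thesis by simp
  qed
  have g1: "Av (\<lambda>x. w x \<bullet> Aop w x) = W + 2 * Av (\<lambda>x. divE w x * (w x \<bullet> x)) - (n + 2 * real k) * F"
    unfolding W_def F_def n_def by (rule G1[OF h])
  have "Av (\<lambda>x. divE w x * (w x \<bullet> x)) = 0" by (simp add: E0 Av_zero_fun)
  with g1 wA have eF: "(n + 2 * real k) * F = (real k + 1) * W" by (simp add: algebra_simps)
  have dS: "divS w x = - real k * (w x \<bullet> x)" for x by (simp add: divS_eq[OF h] E0)
  have dv: "Av (\<lambda>x. (divS w x)\<^sup>2) = (real k)\<^sup>2 * F"
    unfolding dS F_def by (simp add: power_mult_distrib Av_cmul)
  have G: "Av (gradT_sq w) = lam n k * W"
    unfolding W_def n_def lam_def by (rule Av_gradT_sq[OF h hl])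
  have qv: "QV w = n / 2 * (- real k * W)" by (simp add: QV_def wA n_def)
  have kp: "real k > 0" using k by simp
  have l: "lam n k \<noteq> 0" using n0 k by (simp add: lam_def)
  have s1: "sig n k 1 = - real k" by (simp add: sig_def)
  have m: "n + 2 * real k > 0" using n0 by simp
  have Fe: "F = (real k + 1) * W / (n + 2 * real k)" using eF m by (simp add: field_simps)
  show ?thesis
  proof
    show "QV w = cc (real CARD('n)) k 1 * Av (gradT_sq w)"
      unfolding qv G n_def[symmetric] cc_def s1 by (rule alg1[OF l])
    show "Av (\<lambda>x. (divS w x)\<^sup>2) = alph (real CARD('n)) k 1 * Av (gradT_sq w)"
      unfolding dv G n_def[symmetric] alph_def cc_def s1 Fe by (rule alg1b[OF l]) (use m n0 in auto)
  qed
qed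

lemma case2:
  fixes w :: "real^'n \<Rightarrow> real^'n"
  assumes n3: "CARD('n) \<ge> 3" and k: "k \<ge> 1" and H: "H2 k w"
  shows "QV w = cc (real CARD('n)) k 2 * Av (gradT_sq w) \<and>
         Av (\<lambda>x. (divS w x)\<^sup>2) = alph (real CARD('n)) k 2 * Av (gradT_sq w)"
proof -
  define n where "n = real CARD('n)"
  have n0: "n \<ge> 3" using n3 by (simp add: n_def)
  have Hs: "Hsol k w" and A: "\<And>x. x \<in> sphere 0 1 \<Longrightarrow> Aop w x = w x" using H by (auto simp: H2_def)
  have Hk: "Hnk k w" using Hs by (simp add: Hsol_def)
  note h = Hnk_unpack(2)[OF Hk] and hl = Hnk_unpack(3)[OF Hk]
  have E0: "divE w x = 0" for x by (rule divE_zero[OF Hs])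
  define W where "W = Av (\<lambda>x. w x \<bullet> w x)"
  have wA: "Av (\<lambda>x. w x \<bullet> Aop w x) = W"
    unfolding W_def by (rule Av_cong) (simp add: A)
  have dS: "divS w x = - real k * (w x \<bullet> x)" for x by (simp add: divS_eq[OF h] E0)
  have f0: "w x \<bullet> x = 0" if "norm x = 1" for x
  proof -
    have "w x \<bullet> x = Aop w x \<bullet> x" using A[of x] that by simp
    also have "\<dots> = divS w x" by (rule Aop_x_sphere[OF that])
    finally have "w x \<bullet> x = - real k * (w x \<bullet> x)" by (simp add: dS)
    then have "(real k + 1) * (w x \<bullet> x) = 0" by (simp add: algebra_simps)
    then show ?thesis by simp
  qed
  have dv: "Av (\<lambda>x. (divS w x)\<^sup>2) = 0"
  proof -
    have "Av (\<lambda>x. (divS w x)\<^sup>2) = Av (\<lambda>x::real^'n. 0::real)" by (rule Av_cong) (simp add: dS f0)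
    then show ?thesis by (simp add: Av_zero_fun)
  qed
  have G: "Av (gradT_sq w) = lam n k * W"
    unfolding W_def n_def lam_def by (rule Av_gradT_sq[OF h hl])
  have qv: "QV w = n / 2 * W" by (simp add: QV_def wA n_def)
  have l: "lam n k \<noteq> 0" using n0 k by (simp add: lam_def)
  have s2: "sig n k 2 = 1" by (simp add: sig_def)
  show ?thesis
  proof
    show "QV w = cc (real CARD('n)) k 2 * Av (gradT_sq w)"
      unfolding qv G n_def[symmetric] cc_def s2 by (rule alg2[OF l])
    show "Av (\<lambda>x. (divS w x)\<^sup>2) = alph (real CARD('n)) k 2 * Av (gradT_sq w)"
      unfolding dv alph_def cc_def s2 n_def[symmetric] using l by simp
  qed
qed


lemma lap_sum:
  assumes "finite S" and h: "\<And>j. j \<in> S \<Longrightarrow> hpoly a (f j)"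
  shows "laplacian (\<lambda>x. \<Sum>j\<in>S. f j x) x = (\<Sum>j\<in>S. laplacian (f j) x)"
proof -
  have "pd i (\<lambda>x. \<Sum>j\<in>S. f j x) = (\<lambda>x. \<Sum>j\<in>S. pd i (f j) x)" for i
    by (rule ext) (rule pd_sum[OF assms(1) h])
  then have "pd i (pd i (\<lambda>x. \<Sum>j\<in>S. f j x)) x = (\<Sum>j\<in>S. pd i (pd i (f j)) x)" for i
    by (simp add: pd_sum[OF assms(1) hpoly_pd[OF h]])
  then have "laplacian (\<lambda>x. \<Sum>j\<in>S. f j x) x = (\<Sum>i\<in>UNIV. \<Sum>j\<in>S. pd i (pd i (f j)) x)"
    unfolding lap_def' by simp
  also have "\<dots> = (\<Sum>j\<in>S. \<Sum>i\<in>UNIV. pd i (pd i (f j)) x)" by (rule sum.swap)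
  finally show ?thesis unfolding lap_def' .
qed

definition c0 :: "real \<Rightarrow> nat \<Rightarrow> real" where "c0 n k = n + 2 * real k - 4"
definition bet :: "real \<Rightarrow> nat \<Rightarrow> real" where "bet n k = 2 * (real k - 1) - c0 n k * (n + real k - 1)"

definition qf :: "(real^'n \<Rightarrow> real^'n) \<Rightarrow> nat \<Rightarrow> real^'n \<Rightarrow> real" where
  "qf w k x = (1 / bet (real CARD('n)) k) * divE w x"

definition gc :: "(real^'n \<Rightarrow> real^'n) \<Rightarrow> nat \<Rightarrow> 'n \<Rightarrow> real^'n \<Rightarrow> real" where
  "gc w k j x = (x \<bullet> x) * pd j (qf w k) x - c0 (real CARD('n)) k * (qf w k x * x$j)"

definition gf :: "(real^'n \<Rightarrow> real^'n) \<Rightarrow> nat \<Rightarrow> real^'n \<Rightarrow> real^'n" where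
  "gf w k x = (\<chi> j. gc w k j x)"

lemma comp_gf: "comp (gf w k) j = gc w k j"
  by (simp add: comp_def gf_def fun_eq_iff)

lemma bet_neg:
  assumes n3: "CARD('n) \<ge> 3" and k: "k \<ge> 1"
  shows "bet (real CARD('n)) k < 0"
proof -
  define n where "n = real CARD('n)"
  have n: "n \<ge> 3" using n3 by (simp add: n_def)
  have kk: "real k \<ge> 1" using k by simp
  have a: "c0 n k \<ge> 2 * real k - 1" using n by (simp add: c0_def)
  have b: "n + real k - 1 \<ge> real k + 2" using n by simp
  have "(2 * real k - 1) * (real k + 2) \<le> c0 n k * (n + real k - 1)"
    by (rule mult_mono[OF a b]) (use kk a in auto)
  moreover have "(2 * real k - 1) * (real k + 2) - 2 * (real k - 1) = 2 * real k * real k + real k"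
    by (simp add: algebra_simps)
  moreover have "2 * real k * real k + real k > 0" using kk by (simp add: add_pos_pos)
  ultimately show ?thesis unfolding n_def[symmetric] bet_def by simp
qed

lemma qf_fun: "qf w k = (\<lambda>x. (1 / bet (real CARD('n)) k) * (\<Sum>j\<in>UNIV. pd j (comp w j) x))"
  for w :: "real^'n \<Rightarrow> real^'n"
  by (simp add: qf_def[abs_def] divE_def)

lemma hq:
  fixes w :: "real^'n \<Rightarrow> real^'n"
  assumes hw: "\<And>j. hpoly k (comp w j)"
  shows "hpoly (k - 1) (qf w k)"
  unfolding qf_fun by (intro hpoly_cmul hpoly_sum hpoly_pd hw) auto

lemma lq:
  fixes w :: "real^'n \<Rightarrow> real^'n"
  assumes hw: "\<And>j. hpoly k (comp w j)" and hl: "\<And>j x. laplacian (comp w j) x = 0"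
  shows "laplacian (qf w k) x = 0"
proof -
  have hs: "hpoly (k - 1) (\<lambda>x. \<Sum>j\<in>UNIV. pd j (comp w j) x)" by (intro hpoly_sum hpoly_pd hw) auto
  have l0: "laplacian (comp w j) = (\<lambda>x. 0)" for j using hl by (simp add: fun_eq_iff)
  have "laplacian (\<lambda>x. \<Sum>j\<in>UNIV. pd j (comp w j) x) x = (\<Sum>j\<in>UNIV. laplacian (pd j (comp w j)) x)"
    by (rule lap_sum) (auto intro: hpoly_pd hw)
  also have "\<dots> = (\<Sum>j\<in>UNIV. pd j (laplacian (comp w j)) x)"
    by (simp add: pd_lap_comm[OF hw])
  also have "\<dots> = 0" by (simp add: l0 pd_const)
  finally show ?thesis unfolding qf_fun lap_cmul[OF hs] by simp
qed

lemma Eq: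
  fixes w :: "real^'n \<Rightarrow> real^'n"
  assumes n3: "CARD('n) \<ge> 3" and k: "k \<ge> 1"
  shows "divE w x = bet (real CARD('n)) k * qf w k x"
  using bet_neg[OF n3 k] by (simp add: qf_def)

lemma h_euler:
  fixes w :: "real^'n \<Rightarrow> real^'n"
  assumes hw: "\<And>j. hpoly k (comp w j)" and k: "k \<ge> 1"
  shows "(\<Sum>i\<in>UNIV. x$i * pd i (pd j (qf w k)) x) = (real k - 2) * pd j (qf w k) x"
proof (cases "k = 1")
  case True
  then have "hpoly 0 (qf w k)" using hq[OF hw] by simp
  then have "pd j (qf w k) = (\<lambda>x. 0)" by (rule hpoly0_pd)
  then show ?thesis by (simp add: pd_const)
next
  case False
  then have "real (k - 1 - 1) = real k - 2" using k by (simp add: of_nat_diff)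
  then show ?thesis using euler[OF hpoly_pd[OF hq[OF hw]], of x j] by simp
qed

lemma q_euler:
  fixes w :: "real^'n \<Rightarrow> real^'n"
  assumes hw: "\<And>j. hpoly k (comp w j)" and k: "k \<ge> 1"
  shows "(\<Sum>i\<in>UNIV. x$i * pd i (qf w k) x) = (real k - 1) * qf w k x"
  using euler[OF hq[OF hw], of x] k by (simp add: of_nat_diff)

lemma hA:
  fixes w :: "real^'n \<Rightarrow> real^'n"
  assumes hw: "\<And>j. hpoly k (comp w j)" and k: "k \<ge> 1"
  shows "hpoly k (\<lambda>x. (x \<bullet> x) * pd j (qf w k) x)"
proof (cases "k = 1")
  case True
  then have "hpoly 0 (qf w k)" using hq[OF hw] by simp
  then have "pd j (qf w k) = (\<lambda>x. 0)" by (rule hpoly0_pd)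
  then show ?thesis by simp
next
  case False
  have "hpoly (2 + (k - 1 - 1)) (\<lambda>x. (x \<bullet> x) * pd j (qf w k) x)"
    by (rule hpoly_mult[OF hpoly_xx hpoly_pd[OF hq[OF hw]]])
  moreover have "2 + (k - 1 - 1) = k" using False k by simp
  ultimately show ?thesis by simp
qed

lemma hB:
  fixes w :: "real^'n \<Rightarrow> real^'n"
  assumes hw: "\<And>j. hpoly k (comp w j)" and k: "k \<ge> 1"
  shows "hpoly k (\<lambda>x. qf w k x * x$j)"
proof -
  have "hpoly (k - 1 + 1) (\<lambda>x. qf w k x * x$j)" by (rule hpoly_mult[OF hq[OF hw] hpoly_coord])
  then show ?thesis using k by simp
qed

lemma hgc:
  fixes w :: "real^'n \<Rightarrow> real^'n"
  assumes hw: "\<And>j. hpoly k (comp w j)" and k: "k \<ge> 1"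
  shows "hpoly k (gc w k j)"
proof -
  have "hpoly k (\<lambda>x. (x \<bullet> x) * pd j (qf w k) x - c0 (real CARD('n)) k * (qf w k x * x$j))"
    by (intro hpoly_diff hA[OF hw k] hpoly_cmul hB[OF hw k])
  then show ?thesis by (simp add: gc_def[abs_def])
qed

lemma lgc:
  fixes w :: "real^'n \<Rightarrow> real^'n"
  assumes hw: "\<And>j. hpoly k (comp w j)" and hl: "\<And>j x. laplacian (comp w j) x = 0" and k: "k \<ge> 1"
  shows "laplacian (gc w k j) x = 0"
proof -
  define q where "q = qf w k"
  have hq': "hpoly (k - 1) q" unfolding q_def by (rule hq[OF hw])
  have lq0: "laplacian q = (\<lambda>x. 0)" using lq[OF hw hl] by (simp add: q_def fun_eq_iff)
  have lh: "laplacian (pd j q) x = 0" for x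
    using pd_lap_comm[OF hq', of j x] by (simp add: lq0 pd_const)
  have A: "laplacian (\<lambda>x. (x \<bullet> x) * pd j q x) x = 2 * real CARD('n) * pd j q x + 4 * ((real k - 2) * pd j q x)"
  proof -
    have "laplacian (\<lambda>x. (x \<bullet> x) * pd j q x) x =
        laplacian (\<lambda>x. x \<bullet> x) x * pd j q x + 2 * (\<Sum>i\<in>UNIV. pd i (\<lambda>x. x \<bullet> x) x * pd i (pd j q) x) + (x \<bullet> x) * laplacian (pd j q) x"
      by (rule lap_mult[OF hpoly_xx hpoly_pd[OF hq']])
    also have "(\<Sum>i\<in>UNIV. pd i (\<lambda>x. x \<bullet> x) x * pd i (pd j q) x) = 2 * (\<Sum>i\<in>UNIV. x$i * pd i (pd j q) x)"
      by (simp add: pd_xx sum_distrib_left mult.assoc)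
    also have "(\<Sum>i\<in>UNIV. x$i * pd i (pd j q) x) = (real k - 2) * pd j q x"
      unfolding q_def by (rule h_euler[OF hw k])
    finally show ?thesis by (simp add: lap_xx lh)
  qed
  have B: "laplacian (\<lambda>x. c0 (real CARD('n)) k * (q x * x$j)) x = c0 (real CARD('n)) k * (2 * pd j q x)"
  proof -
    have "laplacian (\<lambda>x. q x * x$j) x = laplacian q x * x$j + 2 * (\<Sum>i\<in>UNIV. pd i q x * pd i (\<lambda>x. x$j) x) + q x * laplacian (\<lambda>x. x$j) x"
      by (rule lap_mult[OF hq' hpoly_coord])
    also have "\<dots> = 2 * pd j q x" by (simp add: lq0 lap_coord pd_coord if_distrib[of "\<lambda>u. _ * u"] cong: if_cong)
    finally have "laplacian (\<lambda>x. q x * x$j) x = 2 * pd j q x" .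
    then show ?thesis by (simp add: lap_cmul[OF hpoly_mult[OF hq' hpoly_coord]])
  qed
  have "laplacian (gc w k j) x = laplacian (\<lambda>x. (x \<bullet> x) * pd j q x) x - laplacian (\<lambda>x. c0 (real CARD('n)) k * (q x * x$j)) x"
    unfolding gc_def[abs_def] q_def
    by (rule lap_diff[OF hA[OF hw k] hpoly_cmul[OF hB[OF hw k]]])
  also have "\<dots> = 0" unfolding A B by (simp add: c0_def algebra_simps)
  finally show ?thesis .
qed


lemma divg:
  fixes w :: "real^'n \<Rightarrow> real^'n"
  assumes hw: "\<And>j. hpoly k (comp w j)" and hl: "\<And>j x. laplacian (comp w j) x = 0" and k: "k \<ge> 1"
  shows "divE (gf w k) x = bet (real CARD('n)) k * qf w k x"
proof -
  define q where "q = qf w k"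
  define c where "c = c0 (real CARD('n)) k"
  have hq': "hpoly (k - 1) q" unfolding q_def by (rule hq[OF hw])
  have pj: "pd j (gc w k j) x = 2 * (x$j * pd j q x) + (x \<bullet> x) * pd j (pd j q) x - c * (pd j q x * x$j + q x)" for j
  proof -
    have "pd j (gc w k j) x = pd j (\<lambda>x. (x \<bullet> x) * pd j q x) x - pd j (\<lambda>x. c * (q x * x$j)) x"
      unfolding gc_def[abs_def] q_def c_def by (rule pd_diff[OF hA[OF hw k] hpoly_cmul[OF hB[OF hw k]]])
    also have "pd j (\<lambda>x. (x \<bullet> x) * pd j q x) x = 2 * (x$j * pd j q x) + (x \<bullet> x) * pd j (pd j q) x"
      by (simp add: pd_mult[OF hpoly_xx hpoly_pd[OF hq']] pd_xx)
    also have "pd j (\<lambda>x. c * (q x * x$j)) x = c * (pd j q x * x$j + q x)"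
      by (simp add: pd_cmul[OF hpoly_mult[OF hq' hpoly_coord]] pd_mult[OF hq' hpoly_coord] pd_coord)
    finally show ?thesis .
  qed
  have lap0: "(\<Sum>j\<in>UNIV. pd j (pd j q) x) = 0" using lq[OF hw hl, of x] by (simp add: q_def lap_def')
  have eu: "(\<Sum>j\<in>UNIV. x$j * pd j q x) = (real k - 1) * q x" unfolding q_def by (rule q_euler[OF hw k])
  have eu2: "(\<Sum>j\<in>UNIV. pd j q x * x$j) = (real k - 1) * q x" using eu by (simp add: mult.commute)
  have "divE (gf w k) x = (\<Sum>j\<in>UNIV. pd j (gc w k j) x)" by (simp add: divE_def comp_gf)
  also have "\<dots> = 2 * (\<Sum>j\<in>UNIV. x$j * pd j q x) + (x \<bullet> x) * (\<Sum>j\<in>UNIV. pd j (pd j q) x)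
       - c * ((\<Sum>j\<in>UNIV. pd j q x * x$j) + real CARD('n) * q x)"
  proof -
    have s3: "(\<Sum>j\<in>UNIV. c * (pd j q x * x$j + q x)) = c * ((\<Sum>j\<in>UNIV. pd j q x * x$j) + real CARD('n) * q x)"
      by (simp add: distrib_left sum.distrib sum_distrib_left mult.left_commute)
    have s2: "(\<Sum>j\<in>UNIV. (x \<bullet> x) * pd j (pd j q) x) = (x \<bullet> x) * (\<Sum>j\<in>UNIV. pd j (pd j q) x)"
      by (simp add: sum_distrib_left)
    have s1: "(\<Sum>j\<in>UNIV. 2 * (x$j * pd j q x)) = 2 * (\<Sum>j\<in>UNIV. x$j * pd j q x)"
      by (simp add: sum_distrib_left)
    show ?thesis unfolding pj sum_subtractf sum.distrib s1 s2 s3 ..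
  qed
  also have "\<dots> = bet (real CARD('n)) k * q x"
    unfolding lap0 eu eu2 by (simp add: bet_def c_def algebra_simps)
  finally show ?thesis by (simp add: q_def)
qed

lemma Avq:
  fixes w :: "real^'n \<Rightarrow> real^'n"
  assumes hw: "\<And>j. hpoly k (comp w j)" and Hn: "Hn w"
  shows "Av (qf w k) = 0"
proof -
  have "Av (\<lambda>x. \<Sum>j\<in>UNIV. pd j (comp w j) x) = (\<Sum>j\<in>UNIV. Av (pd j (comp w j)))"
    by (rule Av_sum) (auto intro: pd_cont hw)
  also have "\<dots> = (\<Sum>j\<in>UNIV. (real CARD('n) + real k - 1) * Av (\<lambda>y. y$j * comp w j y))"
    by (simp add: Rec[OF hw])
  also have "\<dots> = (real CARD('n) + real k - 1) * Av (\<lambda>y. \<Sum>j\<in>UNIV. y$j * comp w j y)"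
    by (simp add: sum_distrib_left Av_sum continuous_intros hpoly_cont[OF hw])
  also have "(\<lambda>y. \<Sum>j\<in>UNIV. y$j * comp w j y) = (\<lambda>y. w y \<bullet> y)" by (simp add: winner)
  also have "Av (\<lambda>y. w y \<bullet> y) = 0" using Hn by (simp add: Hn_def)
  finally have "Av (\<lambda>x. \<Sum>j\<in>UNIV. pd j (comp w j) x) = 0" by simp
  then show ?thesis unfolding qf_fun Av_cmul by simp
qed

lemma gx:
  fixes w :: "real^'n \<Rightarrow> real^'n"
  assumes hw: "\<And>j. hpoly k (comp w j)" and k: "k \<ge> 1"
  shows "gf w k x \<bullet> x = (x \<bullet> x) * ((real k - 1 - c0 (real CARD('n)) k) * qf w k x)"
proof -
  have "gf w k x \<bullet> x = (\<Sum>j\<in>UNIV. gc w k j x * x$j)" by (simp add: gf_def inner_vec_def)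
  also have "\<dots> = (x \<bullet> x) * (\<Sum>j\<in>UNIV. x$j * pd j (qf w k) x) - c0 (real CARD('n)) k * qf w k x * (x \<bullet> x)"
    by (simp add: gc_def inner_vec_def sum_subtractf sum_distrib_left algebra_simps)
  also have "\<dots> = (x \<bullet> x) * ((real k - 1 - c0 (real CARD('n)) k) * qf w k x)"
    by (simp add: q_euler[OF hw k] algebra_simps)
  finally show ?thesis .
qed

definition sf :: "(real^'n \<Rightarrow> real^'n) \<Rightarrow> nat \<Rightarrow> real^'n \<Rightarrow> real^'n" where
  "sf w k x = w x - gf w k x"

lemma comp_sf: "comp (sf w k) j = (\<lambda>x. comp w j x - gc w k j x)"
  by (simp add: comp_def sf_def gf_def fun_eq_iff)

lemma hs:
  fixes w :: "real^'n \<Rightarrow> real^'n"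
  assumes hw: "\<And>j. hpoly k (comp w j)" and k: "k \<ge> 1"
  shows "hpoly k (comp (sf w k) j)"
  unfolding comp_sf by (intro hpoly_diff hw hgc[OF hw k])

lemma ls:
  fixes w :: "real^'n \<Rightarrow> real^'n"
  assumes hw: "\<And>j. hpoly k (comp w j)" and hl: "\<And>j x. laplacian (comp w j) x = 0" and k: "k \<ge> 1"
  shows "laplacian (comp (sf w k) j) x = 0"
  unfolding comp_sf by (simp add: lap_diff[OF hw hgc[OF hw k]] hl lgc[OF hw hl k])

lemma divs:
  fixes w :: "real^'n \<Rightarrow> real^'n"
  assumes n3: "CARD('n) \<ge> 3" and hw: "\<And>j. hpoly k (comp w j)" and hl: "\<And>j x. laplacian (comp w j) x = 0" and k: "k \<ge> 1"
  shows "divE (sf w k) x = 0"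
proof -
  have "divE (sf w k) x = (\<Sum>j\<in>UNIV. pd j (comp w j) x - pd j (gc w k j) x)"
    unfolding divE_def comp_sf by (intro sum.cong refl pd_diff[OF hw hgc[OF hw k]])
  also have "\<dots> = divE w x - divE (gf w k) x" by (simp add: divE_def comp_gf sum_subtractf)
  also have "\<dots> = 0"
  proof -
    have e: "divE w x = bet (real CARD('n)) k * qf w k x" by (rule Eq[OF n3 k])
    show ?thesis by (simp only: divg[OF hw hl k] e diff_self)
  qed
  finally show ?thesis .
qed

lemma Hsol_s:
  fixes w :: "real^'n \<Rightarrow> real^'n"
  assumes n3: "CARD('n) \<ge> 3" and k: "k \<ge> 1" and Hk: "Hnk k w"
  shows "Hsol k (sf w k)"
proof -
  note hw = Hnk_unpack(2)[OF Hk] and hl = Hnk_unpack(3)[OF Hk] and Hn = Hnk_unpack(1)[OF Hk]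
  have n2: "CARD('n) \<ge> 2" using n3 by simp
  have cw: "continuous_on UNIV w" by (rule cont_comp[OF hw])
  have cg: "continuous_on UNIV (gf w k)" using cont_comp[of k "gf w k"] hgc[OF hw k] by (simp add: comp_gf)
  have Avg: "Av (gf w k) = 0"
  proof (rule vec_eq_iff[THEN iffD2], intro allI)
    fix j
    have "Av (gf w k) $ j = Av (\<lambda>x. gf w k x $ j)" by (rule Av_component[OF cg])
    also have "(\<lambda>x. gf w k x $ j) = gc w k j" by (simp add: gf_def fun_eq_iff)
    also have "Av (gc w k j) = 0" by (rule Av_harm_zero[OF n2 hgc[OF hw k] k lgc[OF hw hl k]])
    finally show "Av (gf w k) $ j = 0 $ j" by simp
  qed
  have Av1: "Av (sf w k) = 0"
  proof -
    have "Av (sf w k) = Av (\<lambda>x. w x - gf w k x)" by (simp add: sf_def[abs_def])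
    also have "\<dots> = Av w - Av (gf w k)" by (rule Av_diff[OF cw cg])
    finally show ?thesis using Hn Avg by (simp add: Hn_def)
  qed
  have cq: "continuous_on UNIV (qf w k)" by (rule hpoly_cont[OF hq[OF hw]])
  have Av2: "Av (\<lambda>x. sf w k x \<bullet> x) = 0"
  proof -
    have "Av (\<lambda>x. sf w k x \<bullet> x) = Av (\<lambda>x. w x \<bullet> x - gf w k x \<bullet> x)" by (simp add: sf_def inner_diff_left)
    also have "\<dots> = Av (\<lambda>x. w x \<bullet> x) - Av (\<lambda>x. gf w k x \<bullet> x)"
      by (rule Av_diff) (intro continuous_intros cw cg)+
    also have "Av (\<lambda>x. gf w k x \<bullet> x) = Av (\<lambda>x. (real k - 1 - c0 (real CARD('n)) k) * qf w k x)"
      by (rule Av_cong) (simp add: gx[OF hw k] dot_square_norm)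
    also have "\<dots> = 0" by (simp add: Av_cmul Avq[OF hw Hn])
    finally show ?thesis using Hn by (simp add: Hn_def)
  qed
  show ?thesis
    unfolding Hsol_def Hnk_def Hn_def sph_harm_def hom_poly_iff
    using Av1 Av2 hs[OF hw k] ls[OF hw hl k] divs[OF n3 hw hl k] by auto
qed


lemma cont_sf:
  fixes w :: "real^'n \<Rightarrow> real^'n"
  assumes hw: "\<And>j. hpoly k (comp w j)" and k: "k \<ge> 1"
  shows "continuous_on UNIV (sf w k)"
  by (rule cont_comp[OF hs[OF hw k]])

lemma cont_gf:
  fixes w :: "real^'n \<Rightarrow> real^'n"
  assumes hw: "\<And>j. hpoly k (comp w j)" and k: "k \<ge> 1"
  shows "continuous_on UNIV (gf w k)"
  using cont_comp[of k "gf w k"] hgc[OF hw k] by (simp add: comp_gf)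

lemma Aws_zero:
  fixes w :: "real^'n \<Rightarrow> real^'n"
  assumes n3: "CARD('n) \<ge> 3" and k: "k \<ge> 1" and H: "H3 k w"
  shows "Av (\<lambda>x. w x \<bullet> sf w k x) = 0"
proof -
  have Hk: "Hnk k w" using H by (simp add: H3_def)
  note hw = Hnk_unpack(2)[OF Hk] and hl = Hnk_unpack(3)[OF Hk]
  have W0: "W12_inner w (sf w k) = 0" using H Hsol_s[OF n3 k Hk] by (simp add: H3_def)
  define L where "L = real k * (real k + real CARD('n) - 2)"
  have L0: "L \<ge> 0" using n3 by (simp add: L_def)
  have cw: "continuous_on UNIV w" by (rule cont_comp[OF hw])
  have c1: "continuous_on UNIV (\<lambda>x. w x \<bullet> sf w k x)" by (intro continuous_intros cw cont_sf[OF hw k])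
  have c2: "continuous_on UNIV (\<lambda>x. \<Sum>j\<in>UNIV. gradT (comp w j) x \<bullet> gradT (comp (sf w k) j) x)"
    by (intro continuous_intros gradT_cont[OF hw] gradT_cont[OF hs[OF hw k]])
  have "W12_inner w (sf w k) = Av (\<lambda>x. w x \<bullet> sf w k x) + Av (\<lambda>x. \<Sum>j\<in>UNIV. gradT (comp w j) x \<bullet> gradT (comp (sf w k) j) x)"
    unfolding W12_inner_def by (rule Av_add[OF c1 c2])
  also have "Av (\<lambda>x. \<Sum>j\<in>UNIV. gradT (comp w j) x \<bullet> gradT (comp (sf w k) j) x) =
      (\<Sum>j\<in>UNIV. Av (\<lambda>x. gradT (comp w j) x \<bullet> gradT (comp (sf w k) j) x))"
    by (rule Av_sum) (auto intro!: continuous_intros gradT_cont[OF hw] gradT_cont[OF hs[OF hw k]])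
  also have "\<dots> = (\<Sum>j\<in>UNIV. L * Av (\<lambda>x. comp w j x * comp (sf w k) j x))"
    by (simp add: Av_gradT_harm[OF hw hs[OF hw k] ls[OF hw hl k]] L_def)
  also have "\<dots> = L * Av (\<lambda>x. \<Sum>j\<in>UNIV. comp w j x * comp (sf w k) j x)"
    by (simp add: sum_distrib_left Av_sum continuous_intros hpoly_cont[OF hw] hpoly_cont[OF hs[OF hw k]])
  also have "(\<lambda>x. \<Sum>j\<in>UNIV. comp w j x * comp (sf w k) j x) = (\<lambda>x. w x \<bullet> sf w k x)"
    by (simp add: inner_vec_def comp_def)
  finally have "(1 + L) * Av (\<lambda>x. w x \<bullet> sf w k x) = 0" using W0 by (simp add: algebra_simps)
  then show ?thesis using L0 by simp
qed

lemma hh: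
  fixes w :: "real^'n \<Rightarrow> real^'n"
  assumes hw: "\<And>j. hpoly k (comp w j)" and k: "k \<ge> 1"
  shows "hpoly (1 + k) (\<lambda>x. sf w k x \<bullet> x)"
  by (rule hpoly_winner[OF hs[OF hw k]])

lemma lh:
  fixes w :: "real^'n \<Rightarrow> real^'n"
  assumes n3: "CARD('n) \<ge> 3" and hw: "\<And>j. hpoly k (comp w j)" and hl: "\<And>j x. laplacian (comp w j) x = 0" and k: "k \<ge> 1"
  shows "laplacian (\<lambda>x. sf w k x \<bullet> x) x = 0"
proof -
  note hs' = hs[OF hw k]
  have e: "(\<lambda>x. sf w k x \<bullet> x) = (\<lambda>x. \<Sum>j\<in>UNIV. x$j * comp (sf w k) j x)" by (simp add: winner)
  have "laplacian (\<lambda>x. sf w k x \<bullet> x) x = laplacian (\<lambda>x. \<Sum>j\<in>UNIV. x$j * comp (sf w k) j x) x"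
    by (simp only: e)
  also have "\<dots> = (\<Sum>j\<in>UNIV. laplacian (\<lambda>x. x$j * comp (sf w k) j x) x)"
  proof (rule lap_sum[where a = "1 + k"])
    show "hpoly (1 + k) (\<lambda>x. x$j * comp (sf w k) j x)" for j by (rule hpoly_mult[OF hpoly_coord hs'])
  qed simp
  also have "\<dots> = (\<Sum>j\<in>UNIV. 2 * pd j (comp (sf w k) j) x)"
  proof (rule sum.cong[OF refl])
    fix j
    have "laplacian (\<lambda>x. x$j * comp (sf w k) j x) x = laplacian (\<lambda>x. x$j) x * comp (sf w k) j x
        + 2 * (\<Sum>i\<in>UNIV. pd i (\<lambda>x. x$j) x * pd i (comp (sf w k) j) x) + x$j * laplacian (comp (sf w k) j) x"
      by (rule lap_mult[OF hpoly_coord hs'])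
    also have "\<dots> = 2 * pd j (comp (sf w k) j) x"
      by (simp add: lap_coord ls[OF hw hl k] pd_coord if_distrib[of "\<lambda>u. u * _"] cong: if_cong)
    finally show "laplacian (\<lambda>x. x$j * comp (sf w k) j x) x = 2 * pd j (comp (sf w k) j) x" .
  qed
  also have "\<dots> = 2 * divE (sf w k) x" by (simp add: divE_def sum_distrib_left)
  also have "\<dots> = 0" by (simp add: divs[OF n3 hw hl k])
  finally show ?thesis .
qed

lemma Aqh:
  fixes w :: "real^'n \<Rightarrow> real^'n"
  assumes n3: "CARD('n) \<ge> 3" and hw: "\<And>j. hpoly k (comp w j)" and hl: "\<And>j x. laplacian (comp w j) x = 0" and k: "k \<ge> 1"
  shows "Av (\<lambda>x. qf w k x * (sf w k x \<bullet> x)) = 0"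
  by (rule harm_orth[OF _ hq[OF hw] hh[OF hw k] lq[OF hw hl] lh[OF n3 hw hl k]]) (use n3 k in auto)

lemma Ags:
  fixes w :: "real^'n \<Rightarrow> real^'n"
  assumes n3: "CARD('n) \<ge> 3" and hw: "\<And>j. hpoly k (comp w j)" and hl: "\<And>j x. laplacian (comp w j) x = 0" and k: "k \<ge> 1"
  shows "Av (\<lambda>x. gf w k x \<bullet> sf w k x) = 0"
proof -
  define q where "q = qf w k"
  define s where "s = comp (sf w k)"
  define h where "h x = sf w k x \<bullet> x" for x
  define c where "c = c0 (real CARD('n)) k"
  have hq': "hpoly (k - 1) q" unfolding q_def by (rule hq[OF hw])
  have hs': "hpoly k (s j)" for j unfolding s_def by (rule hs[OF hw k])
  have hG: "hpoly (k - 1 + k) (\<lambda>x. q x * s j x)" for j by (rule hpoly_mult[OF hq' hs'])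
  have he: "h x = (\<Sum>j\<in>UNIV. x$j * s j x)" for x by (simp add: h_def s_def winner)
  have R: "Av (pd j (\<lambda>x. q x * s j x)) = (real CARD('n) + 2 * real k - 2) * Av (\<lambda>y. y$j * (q y * s j y))" for j
    using Rec[OF hG, of j] k by (simp add: of_nat_diff algebra_simps)
  have pG: "pd j (\<lambda>x. q x * s j x) x = pd j q x * s j x + q x * pd j (s j) x" for j x
    by (rule pd_mult[OF hq' hs'])
  have dv: "(\<Sum>j\<in>UNIV. pd j (s j) x) = 0" for x using divs[OF n3 hw hl k, of x] by (simp add: divE_def s_def)
  have cq: "continuous_on UNIV q" by (rule hpoly_cont[OF hq'])
  have cs: "continuous_on UNIV (s j)" for j by (rule hpoly_cont[OF hs'])
  have cpq: "continuous_on UNIV (pd j q)" for j by (rule pd_cont[OF hq'])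
  have ch: "continuous_on UNIV h" unfolding h_def by (rule hpoly_cont[OF hh[OF hw k]])
  have "Av (\<lambda>x. \<Sum>j\<in>UNIV. pd j q x * s j x) = Av (\<lambda>x. \<Sum>j\<in>UNIV. pd j (\<lambda>x. q x * s j x) x)"
    by (simp add: pG sum.distrib dv sum_distrib_left[symmetric])
  also have "\<dots> = (\<Sum>j\<in>UNIV. Av (pd j (\<lambda>x. q x * s j x)))"
    by (rule Av_sum) (auto intro: pd_cont hG)
  also have "\<dots> = (real CARD('n) + 2 * real k - 2) * (\<Sum>j\<in>UNIV. Av (\<lambda>y. y$j * (q y * s j y)))"
    by (simp add: R sum_distrib_left)
  also have "(\<Sum>j\<in>UNIV. Av (\<lambda>y. y$j * (q y * s j y))) = Av (\<lambda>y. \<Sum>j\<in>UNIV. y$j * (q y * s j y))"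
    by (rule Av_sum[symmetric]) (auto intro!: continuous_intros cq cs)
  also have "(\<lambda>y. \<Sum>j\<in>UNIV. y$j * (q y * s j y)) = (\<lambda>y. q y * h y)"
    by (simp add: he sum_distrib_left algebra_simps)
  finally have S1: "Av (\<lambda>x. \<Sum>j\<in>UNIV. pd j q x * s j x) = (real CARD('n) + 2 * real k - 2) * Av (\<lambda>y. q y * h y)" .
  have qh0: "Av (\<lambda>y. q y * h y) = 0" unfolding q_def h_def by (rule Aqh[OF n3 hw hl k])
  have "Av (\<lambda>x. gf w k x \<bullet> sf w k x) = Av (\<lambda>x. (\<Sum>j\<in>UNIV. pd j q x * s j x) - c * (q x * h x))"
  proof (rule Av_cong)
    fix x :: "real^'n" assume x: "norm x = 1"
    have xx: "x \<bullet> x = 1" using x by (simp add: dot_square_norm)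
    have "gf w k x \<bullet> sf w k x = (\<Sum>j\<in>UNIV. gc w k j x * s j x)"
      by (simp add: gf_def inner_vec_def s_def comp_def)
    also have "\<dots> = (\<Sum>j\<in>UNIV. pd j q x * s j x) - c * (q x * (\<Sum>j\<in>UNIV. x$j * s j x))"
      by (simp add: gc_def xx q_def c_def sum_subtractf sum_distrib_left algebra_simps)
    finally show "gf w k x \<bullet> sf w k x = (\<Sum>j\<in>UNIV. pd j q x * s j x) - c * (q x * h x)" by (simp add: he)
  qed
  also have "\<dots> = Av (\<lambda>x. \<Sum>j\<in>UNIV. pd j q x * s j x) - c * Av (\<lambda>x. q x * h x)"
    by (simp add: Av_diff Av_cmul continuous_intros cq ch cpq cs)
  also have "\<dots> = 0" by (simp add: S1 qh0)
  finally show ?thesis .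
qed


lemma alg3a: "(L::real) \<noteq> 0 \<Longrightarrow> n / 2 * (s * W) = n * s / (2 * L) * (L * W)"
  by (simp add: field_simps)

lemma alg3b: "(L::real) \<noteq> 0 \<Longrightarrow> n \<noteq> 0 \<Longrightarrow> C \<noteq> 0 \<Longrightarrow>
   s\<^sup>2 * (s - 1)\<^sup>2 * Q = s\<^sup>2 * (2 * L * (n * s / (2 * L)) - n) / (n * L * C) * (L * (C * (s - 1) * Q))"
  by (simp add: field_simps power2_eq_square)

lemma case3:
  fixes w :: "real^'n \<Rightarrow> real^'n"
  assumes n3: "CARD('n) \<ge> 3" and k: "k \<ge> 1" and H: "H3 k w"
  shows "QV w = cc (real CARD('n)) k 3 * Av (gradT_sq w) \<and>
         Av (\<lambda>x. (divS w x)\<^sup>2) = alph (real CARD('n)) k 3 * Av (gradT_sq w)"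
proof -
  have Hk: "Hnk k w" using H by (simp add: H3_def)
  note hw = Hnk_unpack(2)[OF Hk] and hl = Hnk_unpack(3)[OF Hk]
  define n where "n = real CARD('n)"
  have n0: "n \<ge> 3" using n3 by (simp add: n_def)
  define q where "q = qf w k"
  define s where "s = sf w k"
  define g where "g = gf w k"
  define h where "h x = s x \<bullet> x" for x
  define c where "c = c0 n k"
  define \<beta> where "\<beta> = bet n k"
  define \<mu> where "\<mu> = n + real k - 3"
  define Q where "Q = Av (\<lambda>x. q x * q x)"
  have hq': "hpoly (k - 1) q" unfolding q_def by (rule hq[OF hw])
  have lq': "\<And>x. laplacian q x = 0" unfolding q_def by (rule lq[OF hw hl])
  have cq: "continuous_on UNIV q" by (rule hpoly_cont[OF hq'])
  have cpq: "continuous_on UNIV (pd j q)" for j by (rule pd_cont[OF hq'])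
  have ch: "continuous_on UNIV h" unfolding h_def s_def by (rule hpoly_cont[OF hh[OF hw k]])
  have cw: "continuous_on UNIV w" by (rule cont_comp[OF hw])
  have cs: "continuous_on UNIV s" unfolding s_def by (rule cont_sf[OF hw k])
  have cg: "continuous_on UNIV g" unfolding g_def by (rule cont_gf[OF hw k])
  have wgs: "w x = g x + s x" for x by (simp add: s_def g_def sf_def)
  have A1: "Av (\<lambda>x. w x \<bullet> s x) = 0" unfolding s_def by (rule Aws_zero[OF n3 k H])
  have A2: "Av (\<lambda>x. g x \<bullet> s x) = 0" unfolding s_def g_def by (rule Ags[OF n3 hw hl k])
  have A3: "Av (\<lambda>x. s x \<bullet> s x) = 0"
  proof -
    have "Av (\<lambda>x. s x \<bullet> s x) = Av (\<lambda>x. w x \<bullet> s x - g x \<bullet> s x)"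
      by (simp add: wgs inner_add_left)
    also have "\<dots> = Av (\<lambda>x. w x \<bullet> s x) - Av (\<lambda>x. g x \<bullet> s x)"
      by (rule Av_diff) (intro continuous_intros cw cs cg)+
    finally show ?thesis using A1 A2 by simp
  qed
  have A4: "Av (\<lambda>x. (h x)\<^sup>2) = 0"
  proof -
    have "0 \<le> Av (\<lambda>x. (h x)\<^sup>2)" by (rule Av_nonneg) (intro continuous_intros ch, simp)
    moreover have "Av (\<lambda>x. (h x)\<^sup>2) \<le> Av (\<lambda>x. s x \<bullet> s x)"
    proof (rule Av_mono)
      show "continuous_on UNIV (\<lambda>x. (h x)\<^sup>2)" by (intro continuous_intros ch)
      show "continuous_on UNIV (\<lambda>x. s x \<bullet> s x)" by (intro continuous_intros cs)
      fix y :: "real^'n" assume y: "norm y = 1"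
      have "\<bar>s y \<bullet> y\<bar> \<le> norm (s y) * norm y" by (rule Cauchy_Schwarz_ineq2)
      then have "\<bar>h y\<bar> \<le> norm (s y)" using y by (simp add: h_def)
      then have "\<bar>h y\<bar>\<^sup>2 \<le> (norm (s y))\<^sup>2" by (rule power_mono[OF _ abs_ge_zero])
      then have "(h y)\<^sup>2 \<le> (norm (s y))\<^sup>2" by simp
      then show "(h y)\<^sup>2 \<le> s y \<bullet> s y" by (simp add: power2_norm_eq_inner)
    qed
    ultimately show ?thesis using A3 by simp
  qed
  have A5: "Av (\<lambda>x. q x * h x) = 0" unfolding q_def h_def s_def by (rule Aqh[OF n3 hw hl k])
  have gxs: "g x \<bullet> x = - \<mu> * q x" if "norm x = 1" for x
    using that gx[OF hw k, of x] by (simp add: g_def q_def dot_square_norm c0_def \<mu>_def n_def algebra_simps)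
  have Ex: "divE w x = \<beta> * q x" for x unfolding \<beta>_def q_def n_def by (rule Eq[OF n3 k])
  have wxs: "w x \<bullet> x = - \<mu> * q x + h x" if "norm x = 1" for x
    using gxs[OF that] by (simp add: wgs inner_add_left h_def)
  have ggs: "g x \<bullet> g x = (\<Sum>j\<in>UNIV. pd j q x * pd j q x) - 2 * c * (real k - 1) * (q x * q x) + c\<^sup>2 * (q x * q x)"
    if "norm x = 1" for x
  proof -
    have xx: "x \<bullet> x = 1" using that by (simp add: dot_square_norm)
    have xx': "(\<Sum>j\<in>UNIV. x$j * x$j) = 1" using xx by (simp add: inner_vec_def)
    have eu: "(\<Sum>j\<in>UNIV. x$j * pd j q x) = (real k - 1) * q x" unfolding q_def by (rule q_euler[OF hw k])
    have "g x \<bullet> g x = (\<Sum>j\<in>UNIV. (pd j q x - c * (q x * x$j)) * (pd j q x - c * (q x * x$j)))"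
      by (simp add: g_def gf_def inner_vec_def gc_def xx xx' q_def c_def n_def)
    also have "\<dots> = (\<Sum>j\<in>UNIV. pd j q x * pd j q x) - 2 * c * q x * (\<Sum>j\<in>UNIV. x$j * pd j q x)
        + c\<^sup>2 * (q x * q x) * (\<Sum>j\<in>UNIV. x$j * x$j)"
      by (simp add: algebra_simps power2_eq_square sum.distrib sum_subtractf sum_distrib_left)
    finally show ?thesis by (simp add: eu xx' algebra_simps)
  qed
  have Wv: "Av (\<lambda>x. w x \<bullet> w x) = (real (k - 1) * (n + real (k - 1) + real (k - 1) - 2) - 2 * c * (real k - 1) + c\<^sup>2) * Q"
  proof -
    have "(\<lambda>x. w x \<bullet> w x) = (\<lambda>x. g x \<bullet> g x + 2 * (g x \<bullet> s x) + s x \<bullet> s x)"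
    proof
      fix x
      have "s x \<bullet> g x = g x \<bullet> s x" by (rule inner_commute)
      then show "w x \<bullet> w x = g x \<bullet> g x + 2 * (g x \<bullet> s x) + s x \<bullet> s x"
        by (simp add: wgs inner_add_left inner_add_right)
    qed
    then have "Av (\<lambda>x. w x \<bullet> w x) = Av (\<lambda>x. g x \<bullet> g x + 2 * (g x \<bullet> s x) + s x \<bullet> s x)" by simp
    also have "\<dots> = Av (\<lambda>x. g x \<bullet> g x) + 2 * Av (\<lambda>x. g x \<bullet> s x) + Av (\<lambda>x. s x \<bullet> s x)"
      by (simp add: Av_add Av_cmul continuous_intros cg cs)
    also have "Av (\<lambda>x. g x \<bullet> g x) = Av (\<lambda>x. (\<Sum>j\<in>UNIV. pd j q x * pd j q x) - 2 * c * (real k - 1) * (q x * q x) + c\<^sup>2 * (q x * q x))"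
      by (rule Av_cong) (rule ggs)
    also have "\<dots> = Av (\<lambda>x. \<Sum>j\<in>UNIV. pd j q x * pd j q x) - 2 * c * (real k - 1) * Q + c\<^sup>2 * Q"
      by (simp add: Av_add Av_diff Av_cmul continuous_intros cq cpq Q_def)
    also have "Av (\<lambda>x. \<Sum>j\<in>UNIV. pd j q x * pd j q x) = real (k - 1) * (n + real (k - 1) + real (k - 1) - 2) * Q"
      unfolding Q_def n_def by (rule Green[OF hq' hq' lq'])
    finally show ?thesis using A2 A3 by (simp add: algebra_simps)
  qed
  have Fv: "Av (\<lambda>x. (w x \<bullet> x)\<^sup>2) = \<mu>\<^sup>2 * Q"
  proof -
    have "Av (\<lambda>x. (w x \<bullet> x)\<^sup>2) = Av (\<lambda>x. \<mu>\<^sup>2 * (q x * q x) - 2 * \<mu> * (q x * h x) + (h x)\<^sup>2)"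
      by (rule Av_cong) (simp add: wxs power2_eq_square algebra_simps)
    also have "\<dots> = \<mu>\<^sup>2 * Q - 2 * \<mu> * Av (\<lambda>x. q x * h x) + Av (\<lambda>x. (h x)\<^sup>2)"
      by (simp add: Av_add Av_diff Av_cmul continuous_intros cq ch Q_def)
    finally show ?thesis using A4 A5 by simp
  qed
  have Xv: "Av (\<lambda>x. divE w x * (w x \<bullet> x)) = - \<beta> * \<mu> * Q"
  proof -
    have "Av (\<lambda>x. divE w x * (w x \<bullet> x)) = Av (\<lambda>x. (- \<beta> * \<mu>) * (q x * q x) + \<beta> * (q x * h x))"
      by (rule Av_cong) (simp add: Ex wxs algebra_simps)
    also have "\<dots> = Av (\<lambda>x. (- \<beta> * \<mu>) * (q x * q x)) + Av (\<lambda>x. \<beta> * (q x * h x))"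
      by (rule Av_add) (intro continuous_intros cq ch)+
    also have "\<dots> = (- \<beta> * \<mu>) * Q + \<beta> * Av (\<lambda>x. q x * h x)"
      unfolding Av_cmul Q_def ..
    finally show ?thesis using A5 by simp
  qed
  have Dv: "Av (\<lambda>x. (divS w x)\<^sup>2) = (\<beta> + real k * \<mu>)\<^sup>2 * Q"
  proof -
    have "Av (\<lambda>x. (divS w x)\<^sup>2) = Av (\<lambda>x. (\<beta> + real k * \<mu>)\<^sup>2 * (q x * q x) - 2 * real k * (\<beta> + real k * \<mu>) * (q x * h x) + (real k)\<^sup>2 * (h x)\<^sup>2)"
      by (rule Av_cong) (simp add: divS_eq[OF hw] Ex wxs power2_eq_square algebra_simps)
    also have "\<dots> = (\<beta> + real k * \<mu>)\<^sup>2 * Q - 2 * real k * (\<beta> + real k * \<mu>) * Av (\<lambda>x. q x * h x) + (real k)\<^sup>2 * Av (\<lambda>x. (h x)\<^sup>2)"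
      by (simp add: Av_add Av_diff Av_cmul continuous_intros cq ch Q_def)
    finally show ?thesis using A4 A5 by simp
  qed
  have Gv: "Av (gradT_sq w) = lam n k * Av (\<lambda>x. w x \<bullet> w x)"
    unfolding n_def lam_def by (rule Av_gradT_sq[OF hw hl])
  have g1: "Av (\<lambda>x. w x \<bullet> Aop w x) = Av (\<lambda>x. w x \<bullet> w x) + 2 * Av (\<lambda>x. divE w x * (w x \<bullet> x)) - (n + 2 * real k) * Av (\<lambda>x. (w x \<bullet> x)\<^sup>2)"
    unfolding n_def by (rule G1[OF hw])
  define \<sigma> where "\<sigma> = real k + n - 2"
  have s3: "sig n k 3 = \<sigma>" by (simp add: sig_def \<sigma>_def)
  have kk: "real (k - 1) = real k - 1" using k by (simp add: of_nat_diff)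
  have P1: "real (k - 1) * (n + real (k - 1) + real (k - 1) - 2) - 2 * c * (real k - 1) + c\<^sup>2 = (2 * \<sigma> - n) * (\<sigma> - 1)"
    unfolding kk by (simp add: c_def c0_def \<sigma>_def power2_eq_square algebra_simps)
  have P2: "(2 * \<sigma> - n) * (\<sigma> - 1) + 2 * (- \<beta> * \<mu>) - (n + 2 * real k) * \<mu>\<^sup>2 = \<sigma> * ((2 * \<sigma> - n) * (\<sigma> - 1))"
    by (simp add: \<beta>_def bet_def c0_def \<mu>_def \<sigma>_def power2_eq_square algebra_simps)
  have P3: "(\<beta> + real k * \<mu>)\<^sup>2 = \<sigma>\<^sup>2 * (\<sigma> - 1)\<^sup>2"
    by (simp add: \<beta>_def bet_def c0_def \<mu>_def \<sigma>_def power2_eq_square algebra_simps)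
  have L0: "lam n k \<noteq> 0" using n0 k by (simp add: lam_def)
  have C0: "2 * \<sigma> - n \<noteq> 0" using n0 k by (simp add: \<sigma>_def)
  have Wv': "Av (\<lambda>x. w x \<bullet> w x) = (2 * \<sigma> - n) * (\<sigma> - 1) * Q" unfolding Wv P1 ..
  have mu: "\<mu> = \<sigma> - 1" by (simp add: \<mu>_def \<sigma>_def)
  show ?thesis
  proof
    have "QV w = n / 2 * (((2 * \<sigma> - n) * (\<sigma> - 1) + 2 * (- \<beta> * \<mu>) - (n + 2 * real k) * \<mu>\<^sup>2) * Q)"
      unfolding QV_def g1 Xv Fv Wv' n_def[symmetric] by (simp add: algebra_simps)
    also have "\<dots> = n / 2 * (\<sigma> * ((2 * \<sigma> - n) * (\<sigma> - 1) * Q))"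
      unfolding P2 by (simp add: mult.assoc)
    also have "\<dots> = cc (real CARD('n)) k 3 * Av (gradT_sq w)"
      unfolding Gv Wv' cc_def s3 n_def[symmetric] by (rule alg3a[OF L0])
    finally show "QV w = cc (real CARD('n)) k 3 * Av (gradT_sq w)" .
    have "Av (\<lambda>x. (divS w x)\<^sup>2) = \<sigma>\<^sup>2 * (\<sigma> - 1)\<^sup>2 * Q" unfolding Dv P3 ..
    also have "\<dots> = alph (real CARD('n)) k 3 * Av (gradT_sq w)"
      unfolding Gv Wv' alph_def cc_def s3 n_def[symmetric]
      by (rule alg3b[OF L0 _ C0]) (use n0 in simp)
    finally show "Av (\<lambda>x. (divS w x)\<^sup>2) = alph (real CARD('n)) k 3 * Av (gradT_sq w)" .
  qed
qed

theorem lemma5p2: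
  fixes w :: "real^'n \<Rightarrow> real^'n" and k i :: nat
  assumes "CARD('n) \<ge> 3" and "k \<ge> 1" and "i \<in> {1, 2, 3}" and "Hki k i w"
  shows "QV w = cc (real CARD('n)) k i * Av (gradT_sq w) \<and>
         Av (\<lambda>x. (divS w x)\<^sup>2) = alph (real CARD('n)) k i * Av (gradT_sq w) \<and>
         Qn w = CC (real CARD('n)) k i * Av (gradT_sq w)"
proof -
  have Hk: "Hnk k w" and R: "QV w = cc (real CARD('n)) k i * Av (gradT_sq w) \<and>
         Av (\<lambda>x. (divS w x)\<^sup>2) = alph (real CARD('n)) k i * Av (gradT_sq w)"
  proof -
    consider "i = 1" | "i = 2" | "i = 3" using assms(3) by auto
    then have "Hnk k w \<and> QV w = cc (real CARD('n)) k i * Av (gradT_sq w) \<and>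
         Av (\<lambda>x. (divS w x)\<^sup>2) = alph (real CARD('n)) k i * Av (gradT_sq w)"
    proof cases
      case 1
      then have H: "H1 k w" using assms(4) by (simp add: Hki_def)
      then show ?thesis using case1[OF assms(1,2) H] 1 by (simp add: H1_def Hsol_def)
    next
      case 2
      then have H: "H2 k w" using assms(4) by (simp add: Hki_def)
      then show ?thesis using case2[OF assms(1,2) H] 2 by (simp add: H2_def Hsol_def)
    next
      case 3
      then have H: "H3 k w" using assms(4) by (simp add: Hki_def)
      then show ?thesis using case3[OF assms(1,2) H] 3 by (simp add: H3_def)
    qed
    then show "Hnk k w" "QV w = cc (real CARD('n)) k i * Av (gradT_sq w) \<and>
         Av (\<lambda>x. (divS w x)\<^sup>2) = alph (real CARD('n)) k i * Av (gradT_sq w)" by auto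
  qed
  have "Qn w = CC (real CARD('n)) k i * Av (gradT_sq w)"
    unfolding CC_def
    by (rule assemble[OF assms(1) Hnk_unpack(2)[OF Hk]]) (use R in auto)
  with R show ?thesis by simp
qed


end
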